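(* Let $(\mathfrak{g},\langle\cdot,\cdot\rangle)$ be an Einstein Lorentzian solvable unimodular Lie algebra whose center $Z(\mathfrak{g})$ is nondegenerate (i.e. the restriction of $\langle\cdot,\cdot\rangle$ to $Z(\mathfrak{g})$ is nondegenerate). Then either $Z(\mathfrak{g})$ is Euclidean (the restriction of $\langle\cdot,\cdot\rangle$ to it is positive definite), or $(\mathfrak{g},\langle\cdot,\cdot\rangle)$ is flat and $\mathfrak{g}=\mathfrak{b}\oplus\mathfrak{a}$ where $\mathfrak{b}$ is an abelian ideal and $\mathfrak{a}$ is an abelian subalgebra of $\mathfrak{g}$, and the Levi-Civita product of $\mathfrak{g}$ satisfies $\mathrm{L}_u=\mathrm{ad}_u$ for $u\in\mathfrak{a}$ and $\mathrm{L}_u=0$ for $u\in\mathfrak{b}$.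
   Context: A Lorentzian Lie algebra is a finite-dimensional real Lie algebra with a nondegenerate symmetric bilinear form $\langle\cdot,\cdot\rangle$ of signature $(1,n-1)$. Unimodular means $\mathrm{tr}(\mathrm{ad}_u)=0$ for all $u$. The Levi-Civita product $\mathrm{L}$ is defined by $2\langle \mathrm{L}_uv,w\rangle=\langle[u,v],w\rangle+\langle[w,u],v\rangle+\langle[w,v],u\rangle$; the curvature is $K(u,v)=\mathrm{L}_{[u,v]}-[\mathrm{L}_u,\mathrm{L}_v]$, and $\mathfrak{g}$ is flat if $K=0$. The Ricci operator $\mathrm{Ric}$ is defined by $\langle\mathrm{Ric}(u),v\rangle=\mathrm{tr}(w\mapsto K(u,w)v)$, and $\mathfrak{g}$ is Einstein if $\mathrm{Ric}=\lambda\,\mathrm{Id}$ for some $\lambda\in\mathbb{R}$. *)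

theory Defs
  imports "HOL-Analysis.Analysis"
begin

text \<open>A finite-dimensional real vector space is modelled by a type of class
  euclidean_space (its inner product is only used to define the trace of an
  endomorphism, which is basis independent).\<close>

definition trace :: "('g::euclidean_space \<Rightarrow> 'g) \<Rightarrow> real" where
  "trace f = (\<Sum>b\<in>Basis. inner (f b) b)"

definition lie_algebra :: "('g::euclidean_space \<Rightarrow> 'g \<Rightarrow> 'g) \<Rightarrow> bool" where
  "lie_algebra br \<longleftrightarrow> bilinear br \<and> (\<forall>x. br x x = 0) \<and>
     (\<forall>x y z. br x (br y z) + br y (br z x) + br z (br x y) = 0)"

definition nondegenerate_on :: "('g \<Rightarrow> 'g \<Rightarrow> real) \<Rightarrow> 'g::real_vector set \<Rightarrow> bool" where
  "nondegenerate_on B V \<longleftrightarrow> (\<forall>u\<in>V. (\<forall>v\<in>V. B u v = 0) \<longrightarrow> u = 0)"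

definition neg_definite_on :: "('g \<Rightarrow> 'g \<Rightarrow> real) \<Rightarrow> 'g::real_vector set \<Rightarrow> bool" where
  "neg_definite_on B V \<longleftrightarrow> (\<forall>v\<in>V. v \<noteq> 0 \<longrightarrow> B v v < 0)"

definition pos_definite_on :: "('g \<Rightarrow> 'g \<Rightarrow> real) \<Rightarrow> 'g::real_vector set \<Rightarrow> bool" where
  "pos_definite_on B V \<longleftrightarrow> (\<forall>v\<in>V. v \<noteq> 0 \<longrightarrow> B v v > 0)"

text \<open>Lorentzian: nondegenerate symmetric bilinear form of signature (1,n-1),
  i.e. the maximal dimension of a negative definite subspace is exactly 1.\<close>
definition lorentzian :: "('g::euclidean_space \<Rightarrow> 'g \<Rightarrow> real) \<Rightarrow> bool" where
  "lorentzian B \<longleftrightarrow> bilinear B \<and> (\<forall>u v. B u v = B v u) \<and> nondegenerate_on B UNIV \<and>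
     (\<exists>V. subspace V \<and> dim V = 1 \<and> neg_definite_on B V) \<and>
     (\<forall>V. subspace V \<and> neg_definite_on B V \<longrightarrow> dim V \<le> 1)"

definition unimodular :: "('g::euclidean_space \<Rightarrow> 'g \<Rightarrow> 'g) \<Rightarrow> bool" where
  "unimodular br \<longleftrightarrow> (\<forall>u. trace (br u) = 0)"

primrec derived_series :: "('g::real_vector \<Rightarrow> 'g \<Rightarrow> 'g) \<Rightarrow> nat \<Rightarrow> 'g set" where
  "derived_series br 0 = UNIV"
| "derived_series br (Suc k) =
     span {br x y | x y. x \<in> derived_series br k \<and> y \<in> derived_series br k}"

definition solvable :: "('g::real_vector \<Rightarrow> 'g \<Rightarrow> 'g) \<Rightarrow> bool" where
  "solvable br \<longleftrightarrow> (\<exists>k. derived_series br k = {0})"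

definition center :: "('g::real_vector \<Rightarrow> 'g \<Rightarrow> 'g) \<Rightarrow> 'g set" where
  "center br = {z. \<forall>x. br z x = 0}"

definition LC :: "('g::real_vector \<Rightarrow> 'g \<Rightarrow> 'g) \<Rightarrow> ('g \<Rightarrow> 'g \<Rightarrow> real) \<Rightarrow> 'g \<Rightarrow> 'g \<Rightarrow> 'g" where
  "LC br B u v = (THE x. \<forall>w. 2 * B x w = B (br u v) w + B (br w u) v + B (br w v) u)"

definition curv :: "('g::real_vector \<Rightarrow> 'g \<Rightarrow> 'g) \<Rightarrow> ('g \<Rightarrow> 'g \<Rightarrow> real) \<Rightarrow> 'g \<Rightarrow> 'g \<Rightarrow> 'g \<Rightarrow> 'g" where
  "curv br B u v w = LC br B (br u v) w - (LC br B u (LC br B v w) - LC br B v (LC br B u w))"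

definition flat :: "('g::real_vector \<Rightarrow> 'g \<Rightarrow> 'g) \<Rightarrow> ('g \<Rightarrow> 'g \<Rightarrow> real) \<Rightarrow> bool" where
  "flat br B \<longleftrightarrow> (\<forall>u v w. curv br B u v w = 0)"

definition ricci :: "('g::euclidean_space \<Rightarrow> 'g \<Rightarrow> 'g) \<Rightarrow> ('g \<Rightarrow> 'g \<Rightarrow> real) \<Rightarrow> 'g \<Rightarrow> 'g" where
  "ricci br B u = (THE x. \<forall>v. B x v = trace (\<lambda>w. curv br B u w v))"

definition einstein :: "('g::euclidean_space \<Rightarrow> 'g \<Rightarrow> 'g) \<Rightarrow> ('g \<Rightarrow> 'g \<Rightarrow> real) \<Rightarrow> bool" where
  "einstein br B \<longleftrightarrow> (\<exists>c::real. \<forall>u. ricci br B u = c *\<^sub>R u)"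

definition abelian_on :: "('g::real_vector \<Rightarrow> 'g \<Rightarrow> 'g) \<Rightarrow> 'g set \<Rightarrow> bool" where
  "abelian_on br S \<longleftrightarrow> (\<forall>x\<in>S. \<forall>y\<in>S. br x y = 0)"

definition lie_subalgebra :: "('g::real_vector \<Rightarrow> 'g \<Rightarrow> 'g) \<Rightarrow> 'g set \<Rightarrow> bool" where
  "lie_subalgebra br S \<longleftrightarrow> subspace S \<and> (\<forall>x\<in>S. \<forall>y\<in>S. br x y \<in> S)"

definition lie_ideal :: "('g::real_vector \<Rightarrow> 'g \<Rightarrow> 'g) \<Rightarrow> 'g set \<Rightarrow> bool" where
  "lie_ideal br S \<longleftrightarrow> subspace S \<and> (\<forall>x. \<forall>y\<in>S. br x y \<in> S)"

end

theory Submission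
  imports Defs
begin

locale mla =
  fixes br :: "'g::euclidean_space \<Rightarrow> 'g \<Rightarrow> 'g" and B :: "'g \<Rightarrow> 'g \<Rightarrow> real"
  assumes la: "lie_algebra br" and Bbil: "bilinear B" and Bsym: "\<And>u v. B u v = B v u"
begin

lemma brbil: "bilinear br" using la by (simp add: lie_algebra_def)
lemma br_self[simp]: "br x x = 0" using la by (simp add: lie_algebra_def)
lemma jacobi: "br x (br y z) + br y (br z x) + br z (br x y) = 0"
  using la by (simp add: lie_algebra_def)

lemma br_ladd[simp]: "br (x + y) z = br x z + br y z" by (rule bilinear_ladd[OF brbil])
lemma br_radd[simp]: "br x (y + z) = br x y + br x z" by (rule bilinear_radd[OF brbil])
lemma br_lmul[simp]: "br (c *\<^sub>R x) y = c *\<^sub>R br x y" by (rule bilinear_lmul[OF brbil])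
lemma br_rmul[simp]: "br x (c *\<^sub>R y) = c *\<^sub>R br x y" by (rule bilinear_rmul[OF brbil])
lemma br_lneg[simp]: "br (- x) y = - br x y" by (rule bilinear_lneg[OF brbil])
lemma br_rneg[simp]: "br x (- y) = - br x y" by (rule bilinear_rneg[OF brbil])
lemma br_lsub[simp]: "br (x - y) z = br x z - br y z" by (rule bilinear_lsub[OF brbil])
lemma br_rsub[simp]: "br z (x - y) = br z x - br z y" by (rule bilinear_rsub[OF brbil])
lemma br_lzero[simp]: "br 0 x = 0" by (rule bilinear_lzero[OF brbil])
lemma br_rzero[simp]: "br x 0 = 0" by (rule bilinear_rzero[OF brbil])
lemma br_lsum[simp]: "br (sum f S) y = (\<Sum>i\<in>S. br (f i) y)"
  by (induction S rule: infinite_finite_induct) auto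
lemma br_rsum[simp]: "br y (sum f S) = (\<Sum>i\<in>S. br y (f i))"
  by (induction S rule: infinite_finite_induct) auto

lemma br_anti: "br y x = - br x y"
proof -
  have "br (x + y) (x + y) = br x x + br y x + (br x y + br y y)" by (simp only: br_ladd br_radd)
  then have "br x y + br y x = 0" by (simp add: add.commute)
  then show ?thesis by (metis add.commute eq_neg_iff_add_eq_0)
qed

lemma B_ladd[simp]: "B (x + y) z = B x z + B y z" by (rule bilinear_ladd[OF Bbil])
lemma B_radd[simp]: "B x (y + z) = B x y + B x z" by (rule bilinear_radd[OF Bbil])
lemma B_lmul[simp]: "B (c *\<^sub>R x) y = c * B x y" using bilinear_lmul[OF Bbil] by simp
lemma B_rmul[simp]: "B x (c *\<^sub>R y) = c * B x y" using bilinear_rmul[OF Bbil] by simp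
lemma B_lneg[simp]: "B (- x) y = - B x y" by (rule bilinear_lneg[OF Bbil])
lemma B_rneg[simp]: "B x (- y) = - B x y" by (rule bilinear_rneg[OF Bbil])
lemma B_lsub[simp]: "B (x - y) z = B x z - B y z" by (rule bilinear_lsub[OF Bbil])
lemma B_rsub[simp]: "B z (x - y) = B z x - B z y" by (rule bilinear_rsub[OF Bbil])
lemma B_lzero[simp]: "B 0 x = 0" by (rule bilinear_lzero[OF Bbil])
lemma B_rzero[simp]: "B x 0 = 0" by (rule bilinear_rzero[OF Bbil])
lemma B_lsum[simp]: "B (sum f S) y = (\<Sum>i\<in>S. B (f i) y)"
  by (induction S rule: infinite_finite_induct) auto
lemma B_rsum[simp]: "B y (sum f S) = (\<Sum>i\<in>S. B y (f i))"
  by (induction S rule: infinite_finite_induct) auto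

definition onb :: "'g set \<Rightarrow> 'g set \<Rightarrow> bool" where
  "onb V E \<longleftrightarrow> finite E \<and> E \<subseteq> V \<and> (\<forall>e\<in>E. \<forall>f\<in>E. e \<noteq> f \<longrightarrow> B e f = 0) \<and>
     (\<forall>e\<in>E. B e e = 1 \<or> B e e = -1) \<and> (\<forall>v\<in>V. v = (\<Sum>e\<in>E. (B e e * B v e) *\<^sub>R e))"

lemma onb_finite: "onb V E \<Longrightarrow> finite E" by (simp add: onb_def)
lemma onb_sub: "onb V E \<Longrightarrow> E \<subseteq> V" by (simp add: onb_def)
lemma onb_orth: "onb V E \<Longrightarrow> e \<in> E \<Longrightarrow> f \<in> E \<Longrightarrow> e \<noteq> f \<Longrightarrow> B e f = 0" by (simp add: onb_def)
lemma onb_sq: "onb V E \<Longrightarrow> e \<in> E \<Longrightarrow> B e e * B e e = 1" unfolding onb_def by force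
lemma onb_exp: "onb V E \<Longrightarrow> v \<in> V \<Longrightarrow> v = (\<Sum>e\<in>E. (B e e * B v e) *\<^sub>R e)" by (simp add: onb_def)

lemma onb_parseval: assumes "onb V E" "v \<in> V"
  shows "B v w = (\<Sum>e\<in>E. B e e * B v e * B e w)"
proof -
  have "B v w = B (\<Sum>e\<in>E. (B e e * B v e) *\<^sub>R e) w" using onb_exp[OF assms] by simp
  then show ?thesis by simp
qed

lemma onb_parseval2: assumes "onb V E" "v \<in> V"
  shows "B w v = (\<Sum>e\<in>E. B e e * B w e * B v e)"
  using onb_parseval[OF assms, of w] by (simp add: Bsym mult.commute mult.left_commute)

lemma onb_nondeg: assumes "onb UNIV E" "\<And>w. B x w = 0" shows "x = 0"
  using onb_exp[OF assms(1), of x] assms(2) by simp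

lemma onb_eqI: assumes "onb UNIV E" "\<And>w. B x w = B y w" shows "x = y"
  using onb_nondeg[OF assms(1), of "x - y"] assms(2) by simp

lemma onb_riesz: assumes "onb UNIV E" "linear \<phi>"
  shows "B (\<Sum>e\<in>E. (B e e * \<phi> e) *\<^sub>R e) w = \<phi> w"
proof -
  have "\<phi> w = \<phi> (\<Sum>e\<in>E. (B e e * B w e) *\<^sub>R e)" using onb_exp[OF assms(1), of w] by simp
  also have "\<dots> = (\<Sum>e\<in>E. (B e e * B w e) * \<phi> e)"
    using linear_sum[OF assms(2), of "\<lambda>e. (B e e * B w e) *\<^sub>R e" E] linear_scale[OF assms(2)] by (simp add: o_def)
  finally show ?thesis by (simp add: Bsym mult.commute mult.left_commute)
qed

lemma onb_union:
  assumes E1: "onb V1 E1" and E2: "onb V2 E2" and orth: "\<And>x y. x \<in> V1 \<Longrightarrow> y \<in> V2 \<Longrightarrow> B x y = 0"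
    and sub: "V1 \<subseteq> V" "V2 \<subseteq> V" and dec: "\<And>v. v \<in> V \<Longrightarrow> \<exists>x\<in>V1. \<exists>y\<in>V2. v = x + y"
  shows "onb V (E1 \<union> E2)"
proof -
  have f: "finite E1" "finite E2" using E1 E2 onb_finite by auto
  have s: "E1 \<subseteq> V1" "E2 \<subseteq> V2" using E1 E2 onb_sub by auto
  have disj: "E1 \<inter> E2 = {}"
  proof (rule ccontr)
    assume "E1 \<inter> E2 \<noteq> {}" then obtain e where "e \<in> E1" "e \<in> E2" by auto
    then have "B e e = 0" using orth s by auto
    then show False using onb_sq[OF E1 \<open>e \<in> E1\<close>] by simp
  qed
  have orth2: "\<And>x y. x \<in> V2 \<Longrightarrow> y \<in> V1 \<Longrightarrow> B x y = 0" using orth Bsym by metis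
  have "v = (\<Sum>e\<in>E1 \<union> E2. (B e e * B v e) *\<^sub>R e)" if vV: "v \<in> V" for v
  proof -
    obtain x y where xy: "x \<in> V1" "y \<in> V2" "v = x + y" using dec[OF vV] by auto
    have a: "(\<Sum>e\<in>E1. (B e e * B v e) *\<^sub>R e) = x"
    proof -
      have "(\<Sum>e\<in>E1. (B e e * B v e) *\<^sub>R e) = (\<Sum>e\<in>E1. (B e e * B x e) *\<^sub>R e)"
        using xy s orth2 by (intro sum.cong) auto
      then show ?thesis using onb_exp[OF E1 xy(1)] by simp
    qed
    have b: "(\<Sum>e\<in>E2. (B e e * B v e) *\<^sub>R e) = y"
    proof -
      have "(\<Sum>e\<in>E2. (B e e * B v e) *\<^sub>R e) = (\<Sum>e\<in>E2. (B e e * B y e) *\<^sub>R e)"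
        using xy s orth by (intro sum.cong) auto
      then show ?thesis using onb_exp[OF E2 xy(2)] by simp
    qed
    show ?thesis using a b xy f disj by (simp add: sum.union_disjoint)
  qed
  moreover have "\<forall>e\<in>E1 \<union> E2. \<forall>f\<in>E1 \<union> E2. e \<noteq> f \<longrightarrow> B e f = 0"
    using E1 E2 s orth orth2 unfolding onb_def by blast
  ultimately show ?thesis using E1 E2 sub s f unfolding onb_def by auto
qed

lemma onb_single: assumes "B e e = 1 \<or> B e e = -1" shows "onb (span {e}) {e}"
  unfolding onb_def
proof (intro conjI ballI)
  fix v assume "v \<in> span {e}"
  then obtain c where "v = c *\<^sub>R e" by (auto simp: span_singleton)
  then show "v = (\<Sum>e\<in>{e}. (B e e * B v e) *\<^sub>R e)" using assms by auto
qed (use assms in \<open>auto simp: span_base\<close>)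

lemma onb_empty: "onb {0} {}" by (simp add: onb_def)

lemma onb_exists_pos:
  assumes "subspace V" "pos_definite_on B V"
  shows "\<exists>E. onb V E \<and> (\<forall>e\<in>E. B e e = 1)"
  using assms
proof (induction "dim V" arbitrary: V rule: less_induct)
  case less
  show ?case
  proof (cases "V = {0}")
    case True then show ?thesis using onb_empty by auto
  next
    case False
    then obtain v where v: "v \<in> V" "v \<noteq> 0" using less.prems subspace_0 by blast
    then have pv: "B v v > 0" using less.prems unfolding pos_definite_on_def by auto
    define e where "e = (1 / sqrt (B v v)) *\<^sub>R v"
    have ee: "B e e = 1" using pv by (simp add: e_def)
    have eV: "e \<in> V" using v less.prems by (simp add: e_def subspace_scale)
    define V' where "V' = {w \<in> V. B w e = 0}"
    have sV': "subspace V'" using less.prems unfolding V'_def subspace_def by auto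
    have "e \<notin> V'" using ee by (simp add: V'_def)
    then have psub: "V' \<subset> V" using eV by (auto simp: V'_def)
    have "dim V' < dim V" using dim_psubset[of V' V] psub span_eq_iff[THEN iffD2, OF sV'] span_eq_iff[THEN iffD2, OF less.prems(1)] by simp
    moreover have "pos_definite_on B V'" using less.prems unfolding V'_def pos_definite_on_def by auto
    ultimately obtain E' where E': "onb V' E'" "\<forall>e\<in>E'. B e e = 1" using less.hyps sV' by blast
    have "onb V ({e} \<union> E')"
    proof (rule onb_union[OF onb_single E'(1)])
      show "B e e = 1 \<or> B e e = -1" using ee by simp
      show "B x y = 0" if "x \<in> span {e}" "y \<in> V'" for x y
        using that by (auto simp: span_singleton V'_def Bsym)
      show "span {e} \<subseteq> V" using eV less.prems by (simp add: span_minimal)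
      show "V' \<subseteq> V" using psub by auto
      show "\<exists>x\<in>span {e}. \<exists>y\<in>V'. w = x + y" if "w \<in> V" for w
      proof (intro bexI)
        show "w = B w e *\<^sub>R e + (w - B w e *\<^sub>R e)" by simp
        show "B w e *\<^sub>R e \<in> span {e}" by (simp add: span_base span_scale)
        show "w - B w e *\<^sub>R e \<in> V'" using that eV less.prems ee
          by (simp add: V'_def subspace_diff subspace_scale)
      qed
    qed
    then show ?thesis using E'(2) ee by auto
  qed
qed

lemma onb_extend:
  assumes "subspace V" "pos_definite_on B V" "onb U EU" "U \<subseteq> V" "subspace U"
  shows "\<exists>EW. onb {w \<in> V. \<forall>u\<in>U. B w u = 0} EW \<and> (\<forall>e\<in>EW. B e e = 1) \<and> onb V (EU \<union> EW)"
proof -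
  define W where "W = {w \<in> V. \<forall>u\<in>U. B w u = 0}"
  have sW: "subspace W" using assms(1) unfolding W_def subspace_def by auto
  have pW: "pos_definite_on B W" using assms(2) unfolding W_def pos_definite_on_def by auto
  obtain EW where EW: "onb W EW" "\<forall>e\<in>EW. B e e = 1" using onb_exists_pos[OF sW pW] by auto
  have EUV: "EU \<subseteq> V" using onb_sub[OF assms(3)] assms(4) by auto
  have "onb V (EU \<union> EW)"
  proof (rule onb_union[OF assms(3) EW(1) _ assms(4)])
    show "B x y = 0" if "x \<in> U" "y \<in> W" for x y using that by (auto simp: W_def Bsym)
    show "W \<subseteq> V" by (auto simp: W_def)
    show "\<exists>x\<in>U. \<exists>y\<in>W. v = x + y" if "v \<in> V" for v
    proof -
      define p where "p = (\<Sum>e\<in>EU. (B e e * B v e) *\<^sub>R e)"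
      have pU: "p \<in> U"
      proof -
        show ?thesis unfolding p_def using onb_sub[OF assms(3)] assms(5) by (auto intro!: subspace_sum subspace_scale)
      qed
      have "B (v - p) u = 0" if "u \<in> U" for u
        using onb_parseval2[OF assms(3) that, of v] by (simp add: p_def Bsym mult.commute mult.left_commute)
      moreover have "v - p \<in> V" using pU assms(4) that assms(1) by (auto intro: subspace_diff)
      ultimately have "v - p \<in> W" by (auto simp: W_def)
      then show ?thesis using pU by (intro bexI[of _ p] bexI[of _ "v - p"]) auto
    qed
  qed
  then show ?thesis using EW W_def by auto
qed

lemma trace_add: "trace (\<lambda>w. f w + g w) = trace f + trace g"
  by (simp add: trace_def inner_add_left sum.distrib)
lemma trace_scale: "trace (\<lambda>w. c *\<^sub>R f w) = c * trace f"
  by (simp add: trace_def sum_distrib_left)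
lemma trace_diff: "trace (\<lambda>w. f w - g w) = trace f - trace g"
  by (simp add: trace_def inner_diff_left sum_subtractf)

end

locale mlaE = mla +
  fixes E :: "'a set"
  assumes EU: "onb UNIV E"
begin

lemma Efin: "finite E" using EU onb_finite by auto

lemma trace_onb: assumes "linear f"
  shows "trace f = (\<Sum>e\<in>E. B e e * B (f e) e)"
proof -
  have fb: "f b = (\<Sum>e\<in>E. (B e e * B b e) *\<^sub>R f e)" for b
  proof -
    have "f b = f (\<Sum>e\<in>E. (B e e * B b e) *\<^sub>R e)" using onb_exp[OF EU, of b] by simp
    also have "\<dots> = (\<Sum>e\<in>E. (B e e * B b e) *\<^sub>R f e)"
      using linear_sum[OF assms, of "\<lambda>e. (B e e * B b e) *\<^sub>R e" E] linear_scale[OF assms] by (simp add: o_def)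
    finally show ?thesis .
  qed
  have "trace f = (\<Sum>b\<in>Basis. inner (f b) b)" by (simp add: trace_def)
  also have "\<dots> = (\<Sum>b\<in>Basis. \<Sum>e\<in>E. (B e e * B b e) * inner (f e) b)"
    by (subst fb) (simp add: inner_sum_left)
  also have "\<dots> = (\<Sum>e\<in>E. \<Sum>b\<in>Basis. B e e * (inner (f e) b * B b e))"
    by (subst sum.swap) (simp add: mult.commute mult.left_commute)
  also have "\<dots> = (\<Sum>e\<in>E. B e e * B (\<Sum>b\<in>Basis. inner (f e) b *\<^sub>R b) e)"
    by (simp add: sum_distrib_left)
  also have "\<dots> = (\<Sum>e\<in>E. B e e * B (f e) e)" by (simp add: euclidean_representation)
  finally show ?thesis .
qed

lemma LC_char: "B (LC br B u v) w = (B (br u v) w + B (br w u) v + B (br w v) u) / 2"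
proof -
  define \<phi> where "\<phi> w = (B (br u v) w + B (br w u) v + B (br w v) u) / 2" for w
  have lin: "linear \<phi>"
    by (rule linearI) (simp_all add: \<phi>_def Bsym algebra_simps add_divide_distrib)
  define x0 where "x0 = (\<Sum>e\<in>E. (B e e * \<phi> e) *\<^sub>R e)"
  have x0: "B x0 w = \<phi> w" for w using onb_riesz[OF EU lin] by (simp add: x0_def)
  have "LC br B u v = x0"
    unfolding LC_def
  proof (rule the_equality)
    show "\<forall>w. 2 * B x0 w = B (br u v) w + B (br w u) v + B (br w v) u" by (simp add: x0 \<phi>_def)
    fix x assume "\<forall>w. 2 * B x w = B (br u v) w + B (br w u) v + B (br w v) u"
    then have "B x w = B x0 w" for w by (simp add: x0 \<phi>_def) (metis mult.commute)
    then show "x = x0" by (rule onb_eqI[OF EU])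
  qed
  then show ?thesis by (simp add: x0 \<phi>_def)
qed

abbreviation L where "L \<equiv> LC br B"

lemma L_ladd[simp]: "L (u1 + u2) v = L u1 v + L u2 v"
  by (rule onb_eqI[OF EU]) (simp add: LC_char add_divide_distrib)
lemma L_radd[simp]: "L u (v1 + v2) = L u v1 + L u v2"
  by (rule onb_eqI[OF EU]) (simp add: LC_char add_divide_distrib)
lemma L_lmul[simp]: "L (c *\<^sub>R u) v = c *\<^sub>R L u v"
  by (rule onb_eqI[OF EU]) (simp add: LC_char algebra_simps)
lemma L_rmul[simp]: "L u (c *\<^sub>R v) = c *\<^sub>R L u v"
  by (rule onb_eqI[OF EU]) (simp add: LC_char algebra_simps)
lemma Lbil: "bilinear L"
  unfolding bilinear_def by (simp add: linearI)
lemma L_lneg[simp]: "L (- x) y = - L x y" by (rule bilinear_lneg[OF Lbil])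
lemma L_rneg[simp]: "L x (- y) = - L x y" by (rule bilinear_rneg[OF Lbil])
lemma L_lsub[simp]: "L (x - y) z = L x z - L y z" by (rule bilinear_lsub[OF Lbil])
lemma L_rsub[simp]: "L z (x - y) = L z x - L z y" by (rule bilinear_rsub[OF Lbil])
lemma L_lzero[simp]: "L 0 x = 0" by (rule bilinear_lzero[OF Lbil])
lemma L_rzero[simp]: "L x 0 = 0" by (rule bilinear_rzero[OF Lbil])

lemma L_torsion: "L u v - L v u = br u v"
proof (rule onb_eqI[OF EU])
  fix w
  have "B (br v u) w = - B (br u v) w" by (subst br_anti) simp
  then show "B (L u v - L v u) w = B (br u v) w" by (simp add: LC_char field_simps)
qed

lemma L_skew: "B (L u a) b = - B a (L u b)"
proof -
  have "B (br b a) u = - B (br a b) u" by (subst br_anti) simp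
  moreover have "B (br u a) b = - B (br a u) b" by (subst br_anti) simp
  moreover have "B (br u b) a = - B (br b u) a" by (subst br_anti) simp
  ultimately show ?thesis by (simp add: LC_char Bsym[of a] field_simps)
qed

lemma L_diag: "B (L e y) e = B (br e y) e"
  by (simp add: LC_char)

lemma ricci_char: "B (ricci br B u) v = trace (\<lambda>w. curv br B u w v)"
proof -
  define \<phi> where "\<phi> v = trace (\<lambda>w. curv br B u w v)" for v
  have lin: "linear \<phi>"
  proof (rule linearI)
    show "\<phi> (a + b) = \<phi> a + \<phi> b" for a b
      unfolding \<phi>_def curv_def by (simp add: trace_add[symmetric] algebra_simps)
    show "\<phi> (c *\<^sub>R a) = c *\<^sub>R \<phi> a" for c a
      unfolding \<phi>_def curv_def by (simp add: trace_scale[symmetric] algebra_simps)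
  qed
  define x0 where "x0 = (\<Sum>e\<in>E. (B e e * \<phi> e) *\<^sub>R e)"
  have x0: "B x0 w = \<phi> w" for w using onb_riesz[OF EU lin] by (simp add: x0_def)
  have "ricci br B u = x0"
    unfolding ricci_def
  proof (rule the_equality)
    show "\<forall>v. B x0 v = trace (\<lambda>w. curv br B u w v)" by (simp add: x0 \<phi>_def)
    fix x assume "\<forall>v. B x v = trace (\<lambda>w. curv br B u w v)"
    then have "B x w = B x0 w" for w by (simp add: x0 \<phi>_def)
    then show "x = x0" by (rule onb_eqI[OF EU])
  qed
  then show ?thesis by (simp add: x0 \<phi>_def)
qed

lemma ric_sum: "B (ricci br B u) u = (\<Sum>e\<in>E. B e e * B (curv br B u e u) e)"
proof -
  have "linear (\<lambda>w. curv br B u w u)"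
    by (rule linearI) (simp_all add: curv_def algebra_simps)
  then show ?thesis using ricci_char trace_onb by simp
qed

end

context mla
begin

definition ricE :: "'g set \<Rightarrow> 'g \<Rightarrow> real" where
  "ricE E u = - (\<Sum>e\<in>E. B e e * B (br u e) (br u e)) / 2 - (\<Sum>e\<in>E. B e e * B (br u (br u e)) e) / 2
     + (\<Sum>e\<in>E. \<Sum>f\<in>E. B e e * B f f * (B (br e f) u)\<^sup>2) / 4"

lemma br_linear: "linear (br y)"
  using brbil unfolding bilinear_def by simp

end

context mlaE
begin

lemma antisym_double_sum:
  assumes "\<And>e f. D e f = - D f e"
  shows "(\<Sum>e\<in>S. \<Sum>f\<in>S. w e * w f * D e f) = (0::real)"
proof -
  have "(\<Sum>e\<in>S. \<Sum>f\<in>S. w e * w f * D e f) = (\<Sum>f\<in>S. \<Sum>e\<in>S. w e * w f * D e f)"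
    by (rule sum.swap)
  also have "\<dots> = (\<Sum>f\<in>S. \<Sum>e\<in>S. - (w f * w e * D f e))"
  proof (intro sum.cong refl)
    fix f e show "w e * w f * D e f = - (w f * w e * D f e)" using assms[of e f] by simp
  qed
  also have "\<dots> = - (\<Sum>f\<in>S. \<Sum>e\<in>S. w f * w e * D f e)" by (simp add: sum_negf)
  finally show ?thesis by simp
qed

lemma Bpars: "B x y = (\<Sum>f\<in>E. B f f * B x f * B y f)"
  using onb_parseval2[OF EU, of y x] by simp

lemma br_exp_l: "B (br (br u e) v) w = (\<Sum>f\<in>E. B f f * B (br u e) f * B (br f v) w)"
proof -
  have "br u e = (\<Sum>f\<in>E. (B f f * B (br u e) f) *\<^sub>R f)" using onb_exp[OF EU] by blast
  then have "B (br (br u e) v) w = B (br (\<Sum>f\<in>E. (B f f * B (br u e) f) *\<^sub>R f) v) w" by simp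
  then show ?thesis by (simp add: mult.assoc)
qed

lemma milnor:
  assumes um: "unimodular br"
  shows "B (ricci br B u) u = ricE E u"
proof -
  define a where "a e f = B (br u e) f" for e f
  define b where "b e f = B (br e f) u" for e f
  have banti: "b f e = - b e f" for e f unfolding b_def by (subst br_anti) simp
  define T where "T e f = (- a e f * a f e + a e f * b e f - a e f * a e f)/2
     + ((a e f - a f e + b f e)/2)\<^sup>2 - a e f * ((a e f - a f e + b f e)/2)" for e f
  define G where "G e f = - (a e f)\<^sup>2/2 - a e f * a f e/2 + (b e f)\<^sup>2/4" for e f
  define D where "D e f = ((a f e)\<^sup>2 - (a e f)\<^sup>2)/4 + (a e f + a f e) * b e f / 2" for e f
  have TGD: "T e f = G e f + D e f" for e f
    unfolding T_def G_def D_def banti[of f e] by (simp add: power2_eq_square field_simps)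
  have Danti: "D e f = - D f e" for e f
    unfolding D_def banti[of f e] by (simp add: field_simps)
  have zero: "(\<Sum>e\<in>E. B e e * B (L e y) e) = 0" for y
  proof -
    have "(\<Sum>e\<in>E. B e e * B (L e y) e) = - (\<Sum>e\<in>E. B e e * B (br y e) e)"
      by (simp add: L_diag sum_negf[symmetric] br_anti[of e y for e])
    also have "\<dots> = - trace (br y)" using trace_onb[OF br_linear] by simp
    finally show ?thesis using um by (simp add: unimodular_def)
  qed
  have Lue: "B (L u e) f = (a e f - a f e + b f e) / 2" for e f
    unfolding a_def b_def LC_char by (subst br_anti[of f u]) simp
  have per_e: "B (curv br B u e u) e = (\<Sum>f\<in>E. B f f * T e f) + B (L e (L u u)) e" for e
  proof -
    have t: "L e u = L u e - br u e" using L_torsion[of u e] by (simp add: algebra_simps)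
    have "B (curv br B u e u) e = B (L (br u e) u) e + B (L e u) (L u e) + B (L e (L u u)) e"
      unfolding curv_def using L_skew[of u "L e u" e] by simp
    also have "B (L e u) (L u e) = B (L u e) (L u e) - B (br u e) (L u e)" using t by simp
    also have "B (L (br u e) u) e = (B (br (br u e) u) e + B (br e (br u e)) u + B (br e u) (br u e)) / 2"
      by (simp add: LC_char)
    also have "B (br (br u e) u) e = - (\<Sum>f\<in>E. B f f * a e f * a f e)"
      unfolding a_def by (subst br_exp_l) (simp add: sum_negf[symmetric] br_anti[of f u for f])
    also have "B (br e (br u e)) u = (\<Sum>f\<in>E. B f f * a e f * b e f)"
    proof -
      have "B (br e (br u e)) u = - B (br (br u e) e) u" by (subst br_anti) simp
      also have "\<dots> = (\<Sum>f\<in>E. B f f * a e f * b e f)"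
        unfolding a_def b_def by (subst br_exp_l) (simp add: sum_negf[symmetric] br_anti[of f e for f])
      finally show ?thesis .
    qed
    also have "B (br e u) (br u e) = - (\<Sum>f\<in>E. B f f * a e f * a e f)"
      unfolding a_def by (subst br_anti) (simp add: Bpars[of "br u e" "br u e"])
    also have "B (L u e) (L u e) = (\<Sum>f\<in>E. B f f * B (L u e) f * B (L u e) f)" by (rule Bpars)
    also have "\<dots> = (\<Sum>f\<in>E. B f f * ((a e f - a f e + b f e)/2)\<^sup>2)"
      by (simp add: Lue power2_eq_square mult.assoc)
    also have "B (br u e) (L u e) = (\<Sum>f\<in>E. B f f * B (br u e) f * B (L u e) f)" by (rule Bpars)
    also have "\<dots> = (\<Sum>f\<in>E. B f f * (a e f * ((a e f - a f e + b f e)/2)))"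
      by (simp add: Lue a_def mult.assoc)
    finally have X: "B (curv br B u e u) e = (- (\<Sum>f\<in>E. B f f * a e f * a f e) + (\<Sum>f\<in>E. B f f * a e f * b e f)
        + - (\<Sum>f\<in>E. B f f * a e f * a e f)) / 2 +
      ((\<Sum>f\<in>E. B f f * ((a e f - a f e + b f e) / 2)\<^sup>2) -
       (\<Sum>f\<in>E. B f f * (a e f * ((a e f - a f e + b f e) / 2)))) + B (L e (L u u)) e" .
    have pt: "B f f * T e f = (B f f * a e f * a f e) * (-1/2) + (B f f * a e f * b e f) * (1/2)
        + (B f f * a e f * a e f) * (-1/2) + B f f * ((a e f - a f e + b f e) / 2)\<^sup>2
        - B f f * (a e f * ((a e f - a f e + b f e) / 2))" for f
      unfolding T_def by (simp add: field_simps)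
    have "(\<Sum>f\<in>E. B f f * T e f) = (\<Sum>f\<in>E. B f f * a e f * a f e) * (-1/2) + (\<Sum>f\<in>E. B f f * a e f * b e f) * (1/2)
        + (\<Sum>f\<in>E. B f f * a e f * a e f) * (-1/2) + (\<Sum>f\<in>E. B f f * ((a e f - a f e + b f e) / 2)\<^sup>2)
        - (\<Sum>f\<in>E. B f f * (a e f * ((a e f - a f e + b f e) / 2)))"
      unfolding pt by (simp only: sum.distrib sum_subtractf sum_distrib_right)
    then show ?thesis using X by simp
  qed
  have "B (ricci br B u) u = (\<Sum>e\<in>E. B e e * ((\<Sum>f\<in>E. B f f * T e f) + B (L e (L u u)) e))"
    using ric_sum per_e by simp
  also have "\<dots> = (\<Sum>e\<in>E. \<Sum>f\<in>E. B e e * B f f * T e f)"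
    using zero[of "L u u"] by (simp add: distrib_left sum.distrib sum_distrib_left mult.assoc)
  also have "\<dots> = (\<Sum>e\<in>E. \<Sum>f\<in>E. B e e * B f f * G e f) + (\<Sum>e\<in>E. \<Sum>f\<in>E. B e e * B f f * D e f)"
    by (simp add: TGD distrib_left sum.distrib)
  also have "(\<Sum>e\<in>E. \<Sum>f\<in>E. B e e * B f f * D e f) = 0"
    by (rule antisym_double_sum[OF Danti])
  also have "(\<Sum>e\<in>E. \<Sum>f\<in>E. B e e * B f f * G e f) = ricE E u"
  proof -
    have 1: "B (br u e) (br u e) = (\<Sum>f\<in>E. B f f * (a e f)\<^sup>2)" for e
      by (simp add: Bpars[of "br u e" "br u e"] a_def power2_eq_square mult.assoc)
    have 2: "B (br u (br u e)) e = (\<Sum>f\<in>E. B f f * (a e f * a f e))" for e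
    proof -
      have "br u e = (\<Sum>f\<in>E. (B f f * B (br u e) f) *\<^sub>R f)" using onb_exp[OF EU] by blast
      then have "B (br u (br u e)) e = B (br u (\<Sum>f\<in>E. (B f f * B (br u e) f) *\<^sub>R f)) e" by simp
      then show ?thesis by (simp add: a_def mult.assoc)
    qed
    show ?thesis unfolding ricE_def G_def 1 2 b_def
      by (simp add: sum_distrib_left sum_subtractf[symmetric] sum.distrib[symmetric] sum_divide_distrib algebra_simps)
  qed
  finally show ?thesis by simp
qed

end

context mla
begin

lemma bil_l: "bilinear \<beta> \<Longrightarrow> linear (\<lambda>x. \<beta> x y)" by (simp add: bilinear_def)
lemma bil_r: "bilinear \<beta> \<Longrightarrow> linear (\<lambda>y. \<beta> x y)" by (simp add: bilinear_def)

lemma trace_indep: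
  assumes E: "onb V E" and F: "onb V F" and bl: "bilinear (\<beta> :: 'g \<Rightarrow> 'g \<Rightarrow> real)"
  shows "(\<Sum>e\<in>E. B e e * \<beta> e e) = (\<Sum>f\<in>F. B f f * \<beta> f f)"
proof -
  have EV: "e \<in> V" if "e \<in> E" for e using onb_sub[OF E] that by auto
  have FV: "f \<in> V" if "f \<in> F" for f using onb_sub[OF F] that by auto
  have "(\<Sum>e\<in>E. B e e * \<beta> e e) = (\<Sum>e\<in>E. B e e * (\<Sum>f\<in>F. (B f f * B e f) * \<beta> e f))"
  proof (intro sum.cong refl)
    fix e assume "e \<in> E"
    have "\<beta> e e = \<beta> e (\<Sum>f\<in>F. (B f f * B e f) *\<^sub>R f)" using onb_exp[OF F EV[OF \<open>e \<in> E\<close>]] by simp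
    also have "\<dots> = (\<Sum>f\<in>F. (B f f * B e f) * \<beta> e f)"
      using linear_sum[OF bil_r[OF bl, of e], of "\<lambda>f. (B f f * B e f) *\<^sub>R f" F] linear_scale[OF bil_r[OF bl, of e]] by (simp add: o_def)
    finally show "B e e * \<beta> e e = B e e * (\<Sum>f\<in>F. (B f f * B e f) * \<beta> e f)" by simp
  qed
  also have "\<dots> = (\<Sum>f\<in>F. B f f * (\<Sum>e\<in>E. (B e e * B f e) * \<beta> e f))"
    by (simp add: sum_distrib_left sum.swap[of _ E] Bsym mult.commute mult.left_commute)
  also have "\<dots> = (\<Sum>f\<in>F. B f f * \<beta> f f)"
  proof (intro sum.cong refl)
    fix f assume "f \<in> F"
    have "\<beta> f f = \<beta> (\<Sum>e\<in>E. (B e e * B f e) *\<^sub>R e) f" using onb_exp[OF E FV[OF \<open>f \<in> F\<close>]] by simp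
    also have "\<dots> = (\<Sum>e\<in>E. (B e e * B f e) * \<beta> e f)"
      using linear_sum[OF bil_l[OF bl, of f], of "\<lambda>e. (B e e * B f e) *\<^sub>R e" E] linear_scale[OF bil_l[OF bl, of f]] by (simp add: o_def)
    finally show "B f f * (\<Sum>e\<in>E. (B e e * B f e) * \<beta> e f) = B f f * \<beta> f f" by simp
  qed
  finally show ?thesis .
qed

lemma bilinear_prod: "linear f \<Longrightarrow> linear g \<Longrightarrow> bilinear (\<lambda>x y. (f x :: real) * g y)"
  unfolding bilinear_def by (auto intro!: linearI simp: linear_add linear_scale algebra_simps)

lemma ricE_indep:
  assumes E: "onb V E" and F: "onb V F"
  shows "ricE E x = ricE F x"
proof -
  have lB: "linear (\<lambda>v. B v w)" for w using Bbil by (simp add: bilinear_def)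
  have lB2: "linear (\<lambda>v. B w v)" for w using Bbil by (simp add: bilinear_def)
  have lbr: "linear (\<lambda>v. br v w)" for w using brbil by (simp add: bilinear_def)
  have 1: "(\<Sum>e\<in>E. B e e * B (br x e) (br x e)) = (\<Sum>e\<in>F. B e e * B (br x e) (br x e))"
    by (rule trace_indep[OF E F, of "\<lambda>e e'. B (br x e) (br x e')"])
       (auto simp: bilinear_def intro!: linearI)
  have 2: "(\<Sum>e\<in>E. B e e * B (br x (br x e)) e) = (\<Sum>e\<in>F. B e e * B (br x (br x e)) e)"
    by (rule trace_indep[OF E F, of "\<lambda>e e'. B (br x (br x e)) e'"])
       (auto simp: bilinear_def intro!: linearI)
  have 3: "(\<Sum>f\<in>E. B f f * (B (br e f) x)\<^sup>2) = (\<Sum>f\<in>F. B f f * (B (br e f) x)\<^sup>2)" for e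
  proof -
    have "(\<Sum>f\<in>E. B f f * (B (br e f) x * B (br e f) x)) = (\<Sum>f\<in>F. B f f * (B (br e f) x * B (br e f) x))"
      by (rule trace_indep[OF E F, of "\<lambda>f f'. B (br e f) x * B (br e f') x"])
         (auto simp: bilinear_def intro!: linearI simp: algebra_simps)
    then show ?thesis by (simp add: power2_eq_square)
  qed
  have 4: "(\<Sum>e\<in>E. B e e * (\<Sum>f\<in>F. B f f * (B (br e f) x * B (br e f) x))) =
           (\<Sum>e\<in>F. B e e * (\<Sum>f\<in>F. B f f * (B (br e f) x * B (br e f) x)))"
    by (rule trace_indep[OF E F, of "\<lambda>e e'. (\<Sum>f\<in>F. B f f * (B (br e f) x * B (br e' f) x))"])
       (auto simp: bilinear_def intro!: linearI simp: algebra_simps sum.distrib sum_distrib_left)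
  have "(\<Sum>e\<in>E. \<Sum>f\<in>E. B e e * B f f * (B (br e f) x)\<^sup>2) = (\<Sum>e\<in>E. B e e * (\<Sum>f\<in>E. B f f * (B (br e f) x)\<^sup>2))"
    by (simp add: sum_distrib_left mult.assoc)
  also have "\<dots> = (\<Sum>e\<in>F. B e e * (\<Sum>f\<in>F. B f f * (B (br e f) x)\<^sup>2))"
    using 3 4 by (simp add: power2_eq_square)
  also have "\<dots> = (\<Sum>e\<in>F. \<Sum>f\<in>F. B e e * B f f * (B (br e f) x)\<^sup>2)"
    by (simp add: sum_distrib_left mult.assoc)
  finally show ?thesis unfolding ricE_def using 1 2 by simp
qed

lemma onb_pos_eps: assumes "onb V E" "pos_definite_on B V" "e \<in> E" shows "B e e = 1"
proof -
  have "B e e = 1 \<or> B e e = -1" using assms(1,3) by (simp add: onb_def)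
  moreover have "e \<in> V" using onb_sub[OF assms(1)] assms(3) by auto
  moreover have "e \<noteq> 0" using calculation(1) by auto
  ultimately show ?thesis using assms(2) unfolding pos_definite_on_def by force
qed

lemma onbP_exp: assumes "onb V E" "pos_definite_on B V" "v \<in> V" shows "v = (\<Sum>e\<in>E. B v e *\<^sub>R e)"
proof -
  have "v = (\<Sum>e\<in>E. (B e e * B v e) *\<^sub>R e)" using onb_exp[OF assms(1,3)] .
  also have "\<dots> = (\<Sum>e\<in>E. B v e *\<^sub>R e)" using onb_pos_eps[OF assms(1,2)] by (intro sum.cong) auto
  finally show ?thesis .
qed

lemma onbP_pars: assumes "onb V E" "pos_definite_on B V" "v \<in> V" shows "B w v = (\<Sum>e\<in>E. B w e * B v e)"
proof -
  have "B w v = B w (\<Sum>e\<in>E. B v e *\<^sub>R e)" using onbP_exp[OF assms] by simp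
  then show ?thesis by (simp add: mult.commute)
qed

lemma sum_pos_eps: assumes "onb V E" "pos_definite_on B V" shows "(\<Sum>e\<in>E. B e e * f e) = (\<Sum>e\<in>E. f e)"
  using onb_pos_eps[OF assms] by (intro sum.cong) auto

definition ricP :: "'g set \<Rightarrow> 'g \<Rightarrow> real" where
  "ricP E u = - (\<Sum>e\<in>E. B (br u e) (br u e)) / 2 - (\<Sum>e\<in>E. B (br u (br u e)) e) / 2
     + (\<Sum>e\<in>E. \<Sum>f\<in>E. (B (br e f) u)\<^sup>2) / 4"

lemma ricE_ricP: assumes "onb V E" "pos_definite_on B V" shows "ricE E u = ricP E u"
proof -
  have "(\<Sum>e\<in>E. \<Sum>f\<in>E. B e e * B f f * (B (br e f) u)\<^sup>2) = (\<Sum>e\<in>E. B e e * (\<Sum>f\<in>E. B f f * (B (br e f) u)\<^sup>2))"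
    by (simp add: sum_distrib_left mult.assoc)
  then show ?thesis unfolding ricE_def ricP_def by (simp add: sum_pos_eps[OF assms])
qed

lemma pos_nondeg: assumes "pos_definite_on B V" "x \<in> V" "\<And>w. w \<in> V \<Longrightarrow> B x w = 0" shows "x = 0"
  using assms unfolding pos_definite_on_def by force

primrec dsV :: "'g set \<Rightarrow> nat \<Rightarrow> 'g set" where
  "dsV V 0 = V"
| "dsV V (Suc k) = span {br x y | x y. x \<in> dsV V k \<and> y \<in> dsV V k}"

lemma dsV_shift: "dsV (dsV V (Suc 0)) k = dsV V (Suc k)"
  by (induction k) auto

lemma br_in_ds1: "x \<in> V \<Longrightarrow> y \<in> V \<Longrightarrow> br x y \<in> dsV V (Suc 0)"
  by (auto intro!: span_base)

lemma skew_from_ric: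
  assumes V: "subspace V" "pos_definite_on B V" "\<And>x y. x\<in>V \<Longrightarrow> y\<in>V \<Longrightarrow> br x y \<in> V"
    and E: "onb V E" and u: "u \<in> V" "\<And>d. d \<in> dsV V (Suc 0) \<Longrightarrow> B u d = 0" and r: "ricP E u = 0"
    and vw: "v \<in> V" "w \<in> V"
  shows "B (br u v) w = - B v (br u w)"
proof -
  have EV: "e \<in> V" if "e \<in> E" for e using onb_sub[OF E] that by auto
  have fin: "finite E" using onb_finite[OF E] .
  define \<alpha> where "\<alpha> e f = B (br u e) f" for e f
  have t1: "B (br u e) (br u e) = (\<Sum>f\<in>E. \<alpha> e f * \<alpha> e f)" if "e \<in> E" for e
    unfolding \<alpha>_def by (rule onbP_pars[OF E V(2) V(3)[OF u(1) EV[OF that]]])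
  have t2: "B (br u (br u e)) e = (\<Sum>f\<in>E. \<alpha> e f * \<alpha> f e)" if "e \<in> E" for e
  proof -
    have "br u e = (\<Sum>f\<in>E. B (br u e) f *\<^sub>R f)" by (rule onbP_exp[OF E V(2) V(3)[OF u(1) EV[OF that]]])
    then have "B (br u (br u e)) e = B (br u (\<Sum>f\<in>E. B (br u e) f *\<^sub>R f)) e" by simp
    then show ?thesis by (simp add: \<alpha>_def)
  qed
  have t3: "B (br e f) u = 0" if "e \<in> E" "f \<in> E" for e f
    using u(2)[OF br_in_ds1[OF EV[OF that(1)] EV[OF that(2)]]] by (simp add: Bsym)
  have "ricP E u = - (\<Sum>e\<in>E. \<Sum>f\<in>E. \<alpha> e f * \<alpha> e f) / 2 - (\<Sum>e\<in>E. \<Sum>f\<in>E. \<alpha> e f * \<alpha> f e) / 2"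
    unfolding ricP_def using t1 t2 t3 by simp
  then have s0: "(\<Sum>e\<in>E. \<Sum>f\<in>E. \<alpha> e f * \<alpha> e f) + (\<Sum>e\<in>E. \<Sum>f\<in>E. \<alpha> e f * \<alpha> f e) = 0" using r by simp
  have sw: "(\<Sum>e\<in>E. \<Sum>f\<in>E. \<alpha> f e * \<alpha> f e) = (\<Sum>e\<in>E. \<Sum>f\<in>E. \<alpha> e f * \<alpha> e f)"
    by (rule sum.swap)
  have "(\<Sum>e\<in>E. \<Sum>f\<in>E. (\<alpha> e f + \<alpha> f e)\<^sup>2) = (\<Sum>e\<in>E. \<Sum>f\<in>E. \<alpha> e f * \<alpha> e f) + 2 * (\<Sum>e\<in>E. \<Sum>f\<in>E. \<alpha> e f * \<alpha> f e)
       + (\<Sum>e\<in>E. \<Sum>f\<in>E. \<alpha> f e * \<alpha> f e)"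
    by (simp add: power2_eq_square algebra_simps sum.distrib sum_distrib_left)
  then have "(\<Sum>e\<in>E. \<Sum>f\<in>E. (\<alpha> e f + \<alpha> f e)\<^sup>2) = 0" using s0 sw by simp
  then have z: "\<forall>e\<in>E. (\<Sum>f\<in>E. (\<alpha> e f + \<alpha> f e)\<^sup>2) = 0"
    using fin by (subst (asm) sum_nonneg_eq_0_iff) (auto intro: sum_nonneg)
  have anti: "\<alpha> f e = - \<alpha> e f" if "e \<in> E" "f \<in> E" for e f
  proof -
    have "(\<Sum>f\<in>E. (\<alpha> e f + \<alpha> f e)\<^sup>2) = 0" using z that by auto
    then have "(\<alpha> e f + \<alpha> f e)\<^sup>2 = 0" using fin that by (subst (asm) sum_nonneg_eq_0_iff) auto
    then show ?thesis by (simp add: algebra_simps)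
  qed
  have "B (br u v) w = B (br u (\<Sum>e\<in>E. B v e *\<^sub>R e)) w" using onbP_exp[OF E V(2) vw(1)] by simp
  also have "\<dots> = (\<Sum>e\<in>E. B v e * B (br u e) w)" by simp
  also have "\<dots> = (\<Sum>e\<in>E. B v e * (\<Sum>f\<in>E. \<alpha> e f * B w f))"
    unfolding \<alpha>_def using onbP_pars[OF E V(2) vw(2)] by (simp add: mult.commute)
  also have "\<dots> = (\<Sum>e\<in>E. \<Sum>f\<in>E. B w f * (- \<alpha> f e * B v e))"
  proof (intro sum.cong refl)
    fix e assume e: "e \<in> E"
    show "B v e * (\<Sum>f\<in>E. \<alpha> e f * B w f) = (\<Sum>f\<in>E. B w f * (- \<alpha> f e * B v e))"
      unfolding sum_distrib_left
    proof (intro sum.cong refl)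
      fix f assume f: "f \<in> E"
      show "B v e * (\<alpha> e f * B w f) = B w f * (- \<alpha> f e * B v e)" using anti[OF e f] by simp
    qed
  qed
  also have "\<dots> = (\<Sum>f\<in>E. B w f * (\<Sum>e\<in>E. - \<alpha> f e * B v e))"
    by (subst sum.swap) (simp add: sum_distrib_left)
  also have "\<dots> = - (\<Sum>f\<in>E. B w f * B (br u f) v)"
    unfolding \<alpha>_def using onbP_pars[OF E V(2) vw(1)]
    by (simp add: sum_negf[symmetric] sum_distrib_left mult.commute)
  also have "(\<Sum>f\<in>E. B w f * B (br u f) v) = B (br u (\<Sum>f\<in>E. B w f *\<^sub>R f)) v" by simp
  also have "\<dots> = B (br u w) v" using onbP_exp[OF E V(2) vw(2)] by simp
  finally show ?thesis by (simp add: Bsym)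
qed

lemma abelian_perp:
  assumes V: "pos_definite_on B V" "\<And>x y. x\<in>V \<Longrightarrow> y\<in>V \<Longrightarrow> br x y \<in> V"
    and skew: "\<And>v w. v\<in>V \<Longrightarrow> w\<in>V \<Longrightarrow> B (br u v) w = - B v (br u w)"
    and u: "u \<in> V" and u': "u' \<in> V" "\<And>d. d \<in> dsV V (Suc 0) \<Longrightarrow> B u' d = 0"
  shows "br u u' = 0"
proof (rule pos_nondeg[OF V(1) V(2)[OF u u'(1)]])
  fix w assume w: "w \<in> V"
  show "B (br u u') w = 0" using skew[OF u'(1) w] u'(2)[OF br_in_ds1[OF u w]] by simp
qed

lemma onb_disj: assumes "onb V1 E1" "onb V2 E2" "\<And>x y. x \<in> V1 \<Longrightarrow> y \<in> V2 \<Longrightarrow> B x y = 0"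
  shows "E1 \<inter> E2 = {}"
proof (rule ccontr)
  assume "E1 \<inter> E2 \<noteq> {}" then obtain e where "e \<in> E1" "e \<in> E2" by auto
  then have "B e e = 0" using assms onb_sub by blast
  then show False using onb_sq[OF assms(1) \<open>e \<in> E1\<close>] by simp
qed

lemma ricP_split:
  assumes V: "pos_definite_on B V" "\<And>x y. x\<in>V \<Longrightarrow> y\<in>V \<Longrightarrow> br x y \<in> D" "D \<subseteq> V"
    and ED: "onb D ED" and EP: "onb P EP" and P: "P \<subseteq> V" "\<And>p d. p\<in>P \<Longrightarrow> d\<in>D \<Longrightarrow> B p d = 0"
    and skew: "\<And>u v w. u\<in>P \<Longrightarrow> v\<in>V \<Longrightarrow> w\<in>V \<Longrightarrow> B (br u v) w = - B v (br u w)"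
    and ab: "\<And>p q. p\<in>P \<Longrightarrow> q\<in>P \<Longrightarrow> br p q = 0"
    and x: "x \<in> D"
  shows "ricP (ED \<union> EP) x = ricP ED x"
proof -
  have pD: "pos_definite_on B D" using V(1,3) unfolding pos_definite_on_def by auto
  have disj: "ED \<inter> EP = {}" using onb_disj[OF ED EP] P(2) Bsym by metis
  have fD: "finite ED" and fP: "finite EP" using onb_finite ED EP by auto
  have EDD: "e \<in> D" if "e \<in> ED" for e using onb_sub[OF ED] that by auto
  have EPP: "e \<in> P" if "e \<in> EP" for e using onb_sub[OF EP] that by auto
  have xV: "x \<in> V" using x V(3) by auto
  have EDV: "e \<in> V" if "e \<in> ED" for e using EDD[OF that] V(3) by auto
  have EPV: "e \<in> V" if "e \<in> EP" for e using EPP[OF that] P(1) by auto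
  have un: "(\<Sum>e\<in>ED \<union> EP. g e) = (\<Sum>e\<in>ED. g e) + (\<Sum>e\<in>EP. g e)" for g :: "'g \<Rightarrow> real"
    using sum.union_disjoint[OF fD fP disj] .
  have t2P: "(\<Sum>e\<in>EP. B (br x (br x e)) e) = 0"
  proof (intro sum.neutral ballI)
    fix e assume e: "e \<in> EP"
    have "br x e \<in> V" using V(2)[OF xV EPV[OF e]] V(3) by auto
    then have "br x (br x e) \<in> D" using V(2)[OF xV] by auto
    then show "B (br x (br x e)) e = 0" using P(2)[OF EPP[OF e]] by (metis Bsym)
  qed
  have sq: "(B (br e f) x)\<^sup>2 = (B (br x f) e)\<^sup>2" if "e \<in> V" "f \<in> P" for e f
  proof -
    have "B (br e f) x = - B (br f e) x" by (subst br_anti) simp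
    also have "B (br f e) x = - B e (br f x)" using skew[OF that(2) that(1) xV] .
    also have "br f x = - br x f" by (rule br_anti)
    finally show ?thesis by (simp add: Bsym power2_eq_square)
  qed
  have sq2: "(B (br e f) x)\<^sup>2 = (B (br x e) f)\<^sup>2" if "e \<in> P" "f \<in> V" for e f
  proof -
    have "B (br e f) x = - B (br f e) x" by (subst br_anti) simp
    then show ?thesis using sq[OF that(2) that(1)] by (simp add: power2_eq_square)
  qed
  have parsD: "(\<Sum>e\<in>ED. (B (br x f) e)\<^sup>2) = B (br x f) (br x f)" if "f \<in> V" for f
    using onbP_pars[OF ED pD V(2)[OF xV that], of "br x f"] by (simp add: power2_eq_square)
  have A: "(\<Sum>e\<in>ED. \<Sum>f\<in>EP. (B (br e f) x)\<^sup>2) = (\<Sum>f\<in>EP. B (br x f) (br x f))"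
  proof -
    have "(\<Sum>e\<in>ED. \<Sum>f\<in>EP. (B (br e f) x)\<^sup>2) = (\<Sum>e\<in>ED. \<Sum>f\<in>EP. (B (br x f) e)\<^sup>2)"
      using sq EDV EPP by (intro sum.cong refl) auto
    also have "\<dots> = (\<Sum>f\<in>EP. \<Sum>e\<in>ED. (B (br x f) e)\<^sup>2)" by (rule sum.swap)
    also have "\<dots> = (\<Sum>f\<in>EP. B (br x f) (br x f))" using parsD EPV by (intro sum.cong refl) auto
    finally show ?thesis .
  qed
  have A2: "(\<Sum>e\<in>EP. \<Sum>f\<in>ED. (B (br e f) x)\<^sup>2) = (\<Sum>f\<in>EP. B (br x f) (br x f))"
  proof -
    have "(\<Sum>e\<in>EP. \<Sum>f\<in>ED. (B (br e f) x)\<^sup>2) = (\<Sum>e\<in>EP. \<Sum>f\<in>ED. (B (br x e) f)\<^sup>2)"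
      using sq2 EDV EPP by (intro sum.cong refl) auto
    also have "\<dots> = (\<Sum>f\<in>EP. B (br x f) (br x f))" using parsD EPV by (intro sum.cong refl) auto
    finally show ?thesis .
  qed
  have A3: "(\<Sum>e\<in>EP. \<Sum>f\<in>EP. (B (br e f) x)\<^sup>2) = 0"
    using ab EPP by (intro sum.neutral ballI) auto
  have T3: "(\<Sum>e\<in>ED \<union> EP. \<Sum>f\<in>ED \<union> EP. (B (br e f) x)\<^sup>2) =
      (\<Sum>e\<in>ED. \<Sum>f\<in>ED. (B (br e f) x)\<^sup>2) + 2 * (\<Sum>f\<in>EP. B (br x f) (br x f))"
    unfolding un using A A2 A3 by (simp add: sum.distrib)
  show ?thesis unfolding ricP_def T3 unfolding un using t2P by (simp add: field_simps)
qed

lemma unimod_split: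
  assumes V: "pos_definite_on B V" "\<And>x y. x\<in>V \<Longrightarrow> y\<in>V \<Longrightarrow> br x y \<in> D" "D \<subseteq> V"
    and ED: "onb D ED" and EP: "onb P EP" and P: "P \<subseteq> V" "\<And>p d. p\<in>P \<Longrightarrow> d\<in>D \<Longrightarrow> B p d = 0"
    and EV: "onb V (ED \<union> EP)" and E0: "onb V E0" and um: "(\<Sum>e\<in>E0. B (br x e) e) = 0"
    and x: "x \<in> V"
  shows "(\<Sum>e\<in>ED. B (br x e) e) = 0"
proof -
  have disj: "ED \<inter> EP = {}" using onb_disj[OF ED EP] P(2) Bsym by metis
  have fD: "finite ED" and fP: "finite EP" using onb_finite ED EP by auto
  have "(\<Sum>e\<in>E0. B e e * B (br x e) e) = (\<Sum>e\<in>ED \<union> EP. B e e * B (br x e) e)"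
    by (rule trace_indep[OF E0 EV, of "\<lambda>e e'. B (br x e) e'"]) (auto simp: bilinear_def intro!: linearI)
  then have "(\<Sum>e\<in>ED \<union> EP. B (br x e) e) = 0" using um by (simp add: sum_pos_eps[OF E0 V(1)] sum_pos_eps[OF EV V(1)])
  moreover have "(\<Sum>e\<in>EP. B (br x e) e) = 0"
  proof (intro sum.neutral ballI)
    fix e assume e: "e \<in> EP"
    then have "e \<in> P" using onb_sub[OF EP] by auto
    then show "B (br x e) e = 0" using P(1) V(2)[OF x] P(2) by (auto simp: Bsym)
  qed
  moreover have "(\<Sum>e\<in>ED \<union> EP. B (br x e) e) = (\<Sum>e\<in>ED. B (br x e) e) + (\<Sum>e\<in>EP. B (br x e) e)"
    by (rule sum.union_disjoint[OF fD fP disj])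
  ultimately show ?thesis by linarith
qed

end

context mla
begin

lemma pos_ge0: "pos_definite_on B V \<Longrightarrow> y \<in> V \<Longrightarrow> 0 \<le> B y y"
  unfolding pos_definite_on_def by (cases "y = 0") (auto intro: less_imp_le)

lemma lin_exp: assumes "onb C EC" "linear X" "y \<in> C"
  shows "B (X y) c = (\<Sum>d\<in>EC. B d d * B y d * B (X d) c)"
proof -
  have "X y = X (\<Sum>d\<in>EC. (B d d * B y d) *\<^sub>R d)" using onb_exp[OF assms(1,3)] by simp
  also have "\<dots> = (\<Sum>d\<in>EC. (B d d * B y d) *\<^sub>R X d)"
    using linear_sum[OF assms(2), of "\<lambda>d. (B d d * B y d) *\<^sub>R d" EC] linear_scale[OF assms(2)] by (simp add: o_def)
  finally show ?thesis by simp
qed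

lemma tr_comm:
  assumes EC: "onb C EC" and X: "linear X" "\<And>c. c\<in>C \<Longrightarrow> X c \<in> C"
    and Y: "linear Y" "\<And>c. c\<in>C \<Longrightarrow> Y c \<in> C"
  shows "(\<Sum>c\<in>EC. B c c * B (X (Y c)) c) = (\<Sum>c\<in>EC. B c c * B (Y (X c)) c)"
proof -
  have ECC: "c \<in> C" if "c \<in> EC" for c using onb_sub[OF EC] that by auto
  have "(\<Sum>c\<in>EC. B c c * B (X (Y c)) c) = (\<Sum>c\<in>EC. \<Sum>d\<in>EC. B c c * B d d * (B (Y c) d * B (X d) c))"
    using lin_exp[OF EC X(1) Y(2)[OF ECC]] by (intro sum.cong refl) (simp add: sum_distrib_left mult.assoc mult.left_commute)
  also have "\<dots> = (\<Sum>d\<in>EC. \<Sum>c\<in>EC. B c c * B d d * (B (Y c) d * B (X d) c))" by (rule sum.swap)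
  also have "\<dots> = (\<Sum>c\<in>EC. B c c * B (Y (X c)) c)"
    using lin_exp[OF EC Y(1) X(2)[OF ECC]] by (intro sum.cong refl) (simp add: sum_distrib_left mult.assoc mult.left_commute mult.commute)
  finally show ?thesis .
qed

lemma kleinecke:
  assumes C: "subspace C" "pos_definite_on B C" and EC: "onb C EC"
    and uC: "\<And>c. c\<in>C \<Longrightarrow> br u c \<in> C" and vC: "\<And>c. c\<in>C \<Longrightarrow> br v c \<in> C"
    and wC: "\<And>c. c\<in>C \<Longrightarrow> br (br u v) c \<in> C"
    and skew: "\<And>c c'. c\<in>C \<Longrightarrow> c'\<in>C \<Longrightarrow> B (br (br u v) c) c' = - B c (br (br u v) c')"
    and vw: "br v (br u v) = 0" and c: "c \<in> C"
  shows "br (br u v) c = 0"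
proof -
  define w where "w = br u v"
  have ECC: "c \<in> C" if "c \<in> EC" for c using onb_sub[OF EC] that by auto
  have vw': "br v w = 0" using vw w_def by simp
  have jac1: "br w c = br u (br v c) - br v (br u c)" for c
  proof -
    have "br c w + br u (br v c) + br v (br c u) = 0" using jacobi[of c u v] w_def by simp
    then show ?thesis by (simp add: br_anti[of c w] br_anti[of c u] algebra_simps)
  qed
  have jac2: "br w (br v c) = br v (br w c)" for c
  proof -
    have "br w (br v c) + br v (br c w) + br c (br w v) = 0" using jacobi[of w v c] by simp
    then show ?thesis by (simp add: br_anti[of c w] br_anti[of w v] vw' algebra_simps)
  qed
  have lin: "linear (\<lambda>c. br x c)" for x using br_linear by simp
  have linc: "linear (\<lambda>c. br x (br y c))" for x y by (rule linearI) simp_all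
  have "(\<Sum>c\<in>EC. B c c * B (br w (br w c)) c) =
      (\<Sum>c\<in>EC. B c c * B (br w (br u (br v c))) c) - (\<Sum>c\<in>EC. B c c * B (br w (br v (br u c))) c)"
    by (simp add: jac1 sum_subtractf[symmetric] algebra_simps)
  also have "(\<Sum>c\<in>EC. B c c * B (br w (br v (br u c))) c) = (\<Sum>c\<in>EC. B c c * B (br v (br w (br u c))) c)"
    by (simp add: jac2)
  also have "\<dots> = (\<Sum>c\<in>EC. B c c * B (br w (br u (br v c))) c)"
    using tr_comm[OF EC, of "br v" "\<lambda>c. br w (br u c)"] br_linear linc vC uC wC unfolding w_def by simp
  finally have t0: "(\<Sum>c\<in>EC. B c c * B (br w (br w c)) c) = 0" by simp
  have "(\<Sum>c\<in>EC. B (br w c) (br w c)) = 0"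
  proof -
    have "(\<Sum>c\<in>EC. B (br w c) (br w c)) = (\<Sum>c\<in>EC. - B (br w (br w c)) c)"
    proof (intro sum.cong refl)
      fix c assume c: "c \<in> EC"
      have h: "B (br w c) (br w c) = - B c (br w (br w c))"
        using skew[OF ECC[OF c] wC[OF ECC[OF c]]] unfolding w_def .
      show "B (br w c) (br w c) = - B (br w (br w c)) c" using h Bsym[of c "br w (br w c)"] by simp
    qed
    also have "\<dots> = - (\<Sum>c\<in>EC. B (br w (br w c)) c)" by (simp add: sum_negf)
    finally have "(\<Sum>c\<in>EC. B (br w c) (br w c)) = - (\<Sum>c\<in>EC. B (br w (br w c)) c)" .
    then show ?thesis using t0 sum_pos_eps[OF EC C(2)] by simp
  qed
  then have z: "\<forall>c\<in>EC. B (br w c) (br w c) = 0"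
    using onb_finite[OF EC] pos_ge0[OF C(2)] wC ECC unfolding w_def
    by (subst (asm) sum_nonneg_eq_0_iff) auto
  have z2: "br w c = 0" if "c \<in> EC" for c
    using z that C(2) wC ECC unfolding w_def pos_definite_on_def by force
  have "br w c = br w (\<Sum>d\<in>EC. (B d d * B c d) *\<^sub>R d)" using onb_exp[OF EC c] by simp
  also have "\<dots> = 0" using z2 by simp
  finally show ?thesis unfolding w_def .
qed

lemma proj_in: assumes "onb U EU" "subspace U"
  shows "(\<Sum>e\<in>EU. (B e e * B x e) *\<^sub>R e) \<in> U"
  using onb_sub[OF assms(1)] assms(2) by (auto intro!: subspace_sum subspace_scale)

lemma proj_perp: assumes "onb U EU" "u \<in> U"
  shows "B (x - (\<Sum>e\<in>EU. (B e e * B x e) *\<^sub>R e)) u = 0"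
  using onb_parseval2[OF assms, of x] by (simp add: Bsym mult.commute mult.left_commute)

lemma decomp: assumes "onb U EU" "subspace U" "subspace X" "U \<subseteq> X" "x \<in> X"
  shows "\<exists>q p. x = q + p \<and> q \<in> X \<and> (\<forall>u\<in>U. B q u = 0) \<and> p \<in> U"
proof -
  define p where "p = (\<Sum>e\<in>EU. (B e e * B x e) *\<^sub>R e)"
  have p: "p \<in> U" unfolding p_def by (rule proj_in[OF assms(1,2)])
  have q: "\<forall>u\<in>U. B (x - p) u = 0" using proj_perp[OF assms(1)] unfolding p_def by blast
  have "x - p \<in> X" using assms(3,4,5) p by (auto intro: subspace_diff)
  then show ?thesis using p q by (intro exI[of _ "x - p"] exI[of _ p]) auto
qed

lemma span_ind: assumes "x \<in> span S" "h 0" "\<And>c x y. x \<in> S \<Longrightarrow> h y \<Longrightarrow> h (c *\<^sub>R x + y)"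
  shows "h x"
  using assms by (induction rule: span_induct_alt) auto

theorem AK:
  assumes "subspace V" "pos_definite_on B V" "\<And>x y. x\<in>V \<Longrightarrow> y\<in>V \<Longrightarrow> br x y \<in> V"
    "onb V E" "\<And>x. x\<in>V \<Longrightarrow> (\<Sum>e\<in>E. B (br x e) e) = 0" "dsV V k = {0}" "\<And>x. x\<in>V \<Longrightarrow> ricP E x = 0"
  shows "(\<forall>a\<in>dsV V (Suc 0). \<forall>b\<in>dsV V (Suc 0). br a b = 0) \<and>
         (\<forall>u\<in>V. (\<forall>d\<in>dsV V (Suc 0). B u d = 0) \<longrightarrow> (\<forall>v\<in>V. \<forall>w\<in>V. B (br u v) w = - B v (br u w)))"
  using assms
proof (induction "dim V" arbitrary: V E k rule: less_induct)
  case less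
  note sV = less.prems(1) and pV = less.prems(2) and cV = less.prems(3) and EV = less.prems(4)
    and umV = less.prems(5) and solV = less.prems(6) and rV = less.prems(7)
  define D where "D = dsV V (Suc 0)"
  have Ddef: "D = span {br x y | x y. x \<in> V \<and> y \<in> V}" unfolding D_def by simp
  have brD: "\<And>x y. x\<in>V \<Longrightarrow> y\<in>V \<Longrightarrow> br x y \<in> D" unfolding D_def by (rule br_in_ds1)
  have "{br x y | x y. x \<in> V \<and> y \<in> V} \<subseteq> V" using cV by auto
  then have DV: "D \<subseteq> V" unfolding Ddef using sV by (rule span_minimal)
  have sD: "subspace D" unfolding Ddef by simp
  have skewV: "B (br u v) w = - B v (br u w)" if "u\<in>V" "\<forall>d\<in>D. B u d = 0" "v\<in>V" "w\<in>V" for u v w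
    using skew_from_ric[OF sV pV cV EV that(1) _ rV[OF that(1)] that(3,4)] that(2) unfolding D_def by blast
  have part1: "\<forall>a\<in>D. \<forall>b\<in>D. br a b = 0"
  proof (cases "V = {0}")
    case True
    then have "D \<subseteq> {0}" using DV by auto
    then show ?thesis by auto
  next
    case False
    have "D \<noteq> V"
    proof
      assume DV': "D = V"
      have "dsV V j = V" for j
      proof (induction j)
        case (Suc j)
        have "dsV V (Suc j) = dsV D j" unfolding D_def by (rule dsV_shift[symmetric])
        then show ?case using Suc DV' by simp
      qed simp
      then show False using solV False by simp
    qed
    then have "D \<subset> V" using DV by auto
    then have dimD: "dim D < dim V"
      using dim_psubset[of D V] span_eq_iff[THEN iffD2, OF sD] span_eq_iff[THEN iffD2, OF sV] by simp
    have pD: "pos_definite_on B D" using pV DV unfolding pos_definite_on_def by auto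
    obtain ED where ED: "onb D ED" "\<forall>e\<in>ED. B e e = 1" using onb_exists_pos[OF sD pD] by auto
    define P where "P = {w \<in> V. \<forall>u\<in>D. B w u = 0}"
    obtain EP where EP: "onb P EP" "onb V (ED \<union> EP)"
      using onb_extend[OF sV pV ED(1) DV sD] unfolding P_def by auto
    have PV: "P \<subseteq> V" unfolding P_def by auto
    have Porth: "\<And>p d. p\<in>P \<Longrightarrow> d\<in>D \<Longrightarrow> B p d = 0" unfolding P_def by auto
    have skewP: "\<And>u v w. u\<in>P \<Longrightarrow> v\<in>V \<Longrightarrow> w\<in>V \<Longrightarrow> B (br u v) w = - B v (br u w)"
      using skewV unfolding P_def by auto
    have abP: "\<And>p q. p\<in>P \<Longrightarrow> q\<in>P \<Longrightarrow> br p q = 0"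
    proof -
      fix p q assume pq: "p \<in> P" "q \<in> P"
      show "br p q = 0"
        by (rule abelian_perp[OF pV cV skewP[OF pq(1)]]) (use pq PV Porth D_def in auto)
    qed
    obtain k' where k: "k = Suc k'" using solV False by (cases k) auto
    have solD: "dsV D k' = {0}" using solV unfolding D_def k dsV_shift .
    have cD: "\<And>x y. x\<in>D \<Longrightarrow> y\<in>D \<Longrightarrow> br x y \<in> D" using brD DV by auto
    have umD: "\<And>x. x\<in>D \<Longrightarrow> (\<Sum>e\<in>ED. B (br x e) e) = 0"
      using unimod_split[OF pV brD DV ED(1) EP(1) PV Porth EP(2) EV umV] DV by auto
    have rD: "ricP ED x = 0" if x: "x \<in> D" for x
    proof -
      have "ricP ED x = ricP (ED \<union> EP) x" using ricP_split[OF pV brD DV ED(1) EP(1) PV Porth skewP abP x] by simp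
      also have "\<dots> = ricE (ED \<union> EP) x" using ricE_ricP[OF EP(2) pV] by simp
      also have "\<dots> = ricE E x" using ricE_indep[OF EP(2) EV] by simp
      also have "\<dots> = ricP E x" using ricE_ricP[OF EV pV] by simp
      finally show ?thesis using rV x DV by auto
    qed
    have IH: "(\<forall>a\<in>dsV D (Suc 0). \<forall>b\<in>dsV D (Suc 0). br a b = 0) \<and>
         (\<forall>u\<in>D. (\<forall>d\<in>dsV D (Suc 0). B u d = 0) \<longrightarrow> (\<forall>v\<in>D. \<forall>w\<in>D. B (br u v) w = - B v (br u w)))"
      by (rule less.hyps[OF dimD sD pD cD ED(1) umD solD rD])
    define C where "C = dsV D (Suc 0)"
    have Cdef: "C = span {br x y | x y. x \<in> D \<and> y \<in> D}" unfolding C_def by simp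
    have abC: "\<And>a b. a\<in>C \<Longrightarrow> b\<in>C \<Longrightarrow> br a b = 0" using IH unfolding C_def by blast
    have skD: "\<And>u v w. u\<in>D \<Longrightarrow> (\<forall>d\<in>C. B u d = 0) \<Longrightarrow> v\<in>D \<Longrightarrow> w\<in>D \<Longrightarrow> B (br u v) w = - B v (br u w)"
      using IH unfolding C_def by blast
    have sC: "subspace C" unfolding Cdef by simp
    have "{br x y | x y. x \<in> D \<and> y \<in> D} \<subseteq> D" using cD by auto
    then have CD: "C \<subseteq> D" unfolding Cdef using sD by (rule span_minimal)
    have pC: "pos_definite_on B C" using pD CD unfolding pos_definite_on_def by auto
    obtain EC where EC: "onb C EC" using onb_exists_pos[OF sC pC] by auto
    have brC: "\<And>a c. a\<in>D \<Longrightarrow> c\<in>D \<Longrightarrow> br a c \<in> C" unfolding C_def by (rule br_in_ds1)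
    have uC: "br u c \<in> C" if u: "u \<in> V" and c: "c \<in> C" for u c
    proof -
      have "c \<in> span {br x y | x y. x \<in> D \<and> y \<in> D}" using c Cdef by simp
      then show ?thesis
      proof (rule span_ind)
        show "br u 0 \<in> C" using sC subspace_0 by auto
        fix r x y assume x: "x \<in> {br x y | x y. x \<in> D \<and> y \<in> D}" and y: "br u y \<in> C"
        then obtain a b where ab: "x = br a b" "a \<in> D" "b \<in> D" by auto
        have "br u (br a b) = br (br u a) b + br a (br u b)"
          using jacobi[of u a b] by (simp add: br_anti[of "br b u"] br_anti[of b u] br_anti[of "br u a" b] algebra_simps)
        moreover have "br (br u a) b \<in> C" "br a (br u b) \<in> C"
          using brC brD u ab DV by auto
        ultimately have "br u x \<in> C" using ab sC by (simp add: subspace_add)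
        then show "br u (r *\<^sub>R x + y) \<in> C" using y sC by (simp add: subspace_add subspace_scale)
      qed
    qed
    define PD where "PD = {v \<in> D. \<forall>c\<in>C. B v c = 0}"
    have abPD: "br p q = 0" if "p \<in> PD" "q \<in> PD" for p q
    proof (rule abelian_perp[OF pD cD])
      show "B (br p v) w = - B v (br p w)" if "v \<in> D" "w \<in> D" for v w
        using skD[of p v w] \<open>p \<in> PD\<close> that unfolding PD_def by auto
      show "p \<in> D" "q \<in> D" using \<open>p \<in> PD\<close> \<open>q \<in> PD\<close> unfolding PD_def by auto
      show "B q d = 0" if "d \<in> dsV D (Suc 0)" for d using \<open>q \<in> PD\<close> that unfolding PD_def C_def by auto
    qed
    have kill: "br (br u v) c = 0" if u: "u \<in> P" and v: "v \<in> PD" and c: "c \<in> C" for u v c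
    proof -
      have uV: "u \<in> V" and vD: "v \<in> D" using u v PV unfolding PD_def by auto
      have vV: "v \<in> V" using vD DV by auto
      have wD: "br u v \<in> D" using brD uV vV by auto
      have wPD: "br u v \<in> PD"
      proof -
        have "B (br u v) c' = 0" if "c' \<in> C" for c'
        proof -
          have "B (br u v) c' = - B v (br u c')" using skewP[OF u vV] that CD DV by auto
          also have "B v (br u c') = 0" using v uC[OF uV that] unfolding PD_def by auto
          finally show ?thesis by simp
        qed
        then show ?thesis using wD unfolding PD_def by auto
      qed
      show ?thesis
      proof (rule kleinecke[OF sC pC EC _ _ _ _ _ c])
        show "br u c \<in> C" if "c \<in> C" for c using uC[OF uV that] .
        show "br v c \<in> C" if "c \<in> C" for c using brC[OF vD] that CD by auto
        show "br (br u v) c \<in> C" if "c \<in> C" for c using brC[OF wD] that CD by auto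
        show "B (br (br u v) c) c' = - B c (br (br u v) c')" if "c \<in> C" "c' \<in> C" for c c'
          using skD[of "br u v" c c'] wPD that CD unfolding PD_def by auto
        show "br v (br u v) = 0" using abPD[OF v wPD] .
      qed
    qed
    define G where "G = {br p q | p q. p \<in> P \<and> q \<in> PD}"
    have Gkill: "br g c = 0" if g: "g \<in> span G" and c: "c \<in> C" for g c
      using g
    proof (rule span_ind)
      show "br 0 c = 0" by simp
      fix r x y assume "x \<in> G" "br y c = 0"
      then show "br (r *\<^sub>R x + y) c = 0" using kill c unfolding G_def by auto
    qed
    have decV: "\<exists>p d. x = p + d \<and> p \<in> P \<and> d \<in> D" if "x \<in> V" for x
      using decomp[OF ED(1) sD sV DV that] unfolding P_def by (auto simp: Bsym)
    have decD: "\<exists>q c. d = q + c \<and> q \<in> PD \<and> c \<in> C" if "d \<in> D" for d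
      using decomp[OF EC sC sD CD that] unfolding PD_def by (auto simp: Bsym)
    have DG: "\<exists>g c. g \<in> span G \<and> c \<in> C \<and> d = g + c" if d: "d \<in> D" for d
    proof -
      have "d \<in> span {br x y | x y. x \<in> V \<and> y \<in> V}" using d Ddef by simp
      then show ?thesis
      proof (rule span_ind)
        show "\<exists>g c. g \<in> span G \<and> c \<in> C \<and> 0 = g + c" using sC subspace_0 by (intro exI[of _ 0]) auto
        fix r x y assume x: "x \<in> {br x y | x y. x \<in> V \<and> y \<in> V}" and "\<exists>g c. g \<in> span G \<and> c \<in> C \<and> y = g + c"
        then obtain g c where gc: "g \<in> span G" "c \<in> C" "y = g + c" by auto
        obtain a b where ab: "x = br a b" "a \<in> V" "b \<in> V" using x by auto
        obtain p d1 where a: "a = p + d1" "p \<in> P" "d1 \<in> D" using decV[OF ab(2)] by auto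
        obtain p' d2 where b: "b = p' + d2" "p' \<in> P" "d2 \<in> D" using decV[OF ab(3)] by auto
        obtain q1 c1 where d1: "d1 = q1 + c1" "q1 \<in> PD" "c1 \<in> C" using decD[OF a(3)] by auto
        obtain q2 c2 where d2: "d2 = q2 + c2" "q2 \<in> PD" "c2 \<in> C" using decD[OF b(3)] by auto
        have pV': "p \<in> V" "p' \<in> V" using a b PV by auto
        have "br a b = (br p q2 - br p' q1) + (br p c2 - br p' c1 + br d1 d2)"
          using abP[OF a(2) b(2)] unfolding a(1) b(1) d1(1) d2(1)
          by (simp add: br_anti[of q1 p'] br_anti[of c1 p'] algebra_simps)
        moreover have "br p q2 - br p' q1 \<in> span G"
        proof (rule span_diff)
          show "br p q2 \<in> span G" using a b d1 d2 unfolding G_def by (blast intro: span_base)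
          show "br p' q1 \<in> span G" using a b d1 d2 unfolding G_def by (blast intro: span_base)
        qed
        moreover have "br p c2 - br p' c1 + br d1 d2 \<in> C"
          using uC[OF pV'(1) d2(3)] uC[OF pV'(2) d1(3)] brC[OF a(3) b(3)] sC
          by (simp add: subspace_add subspace_diff)
        ultimately obtain g' c' where gc': "g' \<in> span G" "c' \<in> C" "x = g' + c'" using ab by auto
        show "\<exists>g c. g \<in> span G \<and> c \<in> C \<and> r *\<^sub>R x + y = g + c"
          using gc gc' sC
          by (intro exI[of _ "r *\<^sub>R g' + g"] exI[of _ "r *\<^sub>R c' + c"])
             (auto simp: algebra_simps intro: span_add span_scale subspace_add subspace_scale)
      qed
    qed
    have PDkill: "br q c = 0" if q: "q \<in> PD" and c: "c \<in> C" for q c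
    proof -
      have "q \<in> D" using q unfolding PD_def by auto
      then obtain g c0 where "g \<in> span G" "c0 \<in> C" "q = g + c0" using DG by blast
      then show ?thesis using Gkill abC c by simp
    qed
    show ?thesis
    proof (intro ballI)
      fix a b assume "a \<in> D" "b \<in> D"
      obtain qa ca where a: "a = qa + ca" "qa \<in> PD" "ca \<in> C" using decD[OF \<open>a \<in> D\<close>] by auto
      obtain qb cb where b: "b = qb + cb" "qb \<in> PD" "cb \<in> C" using decD[OF \<open>b \<in> D\<close>] by auto
      show "br a b = 0" unfolding a(1) b(1)
        using abPD[OF a(2) b(2)] PDkill[OF a(2) b(3)] PDkill[OF b(2) a(3)] abC[OF a(3) b(3)]
        by (simp add: br_anti[of ca qb])
    qed
  qed
  show ?case using part1 skewV unfolding D_def by blast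
qed

end

context mla
begin

lemma ideal_sum_nonneg:
  fixes Ea Er :: "'g set" and z0 :: 'g
  defines "E \<equiv> insert z0 (Ea \<union> Er)"
  assumes EU: "onb UNIV E" and z0: "B z0 z0 = -1" "\<And>y. br z0 y = 0" "z0 \<notin> Ea \<union> Er"
    and disj: "Ea \<inter> Er = {}" and fin: "finite Ea" "finite Er"
    and eps: "\<And>e. e \<in> Ea \<union> Er \<Longrightarrow> B e e = 1"
    and H0: "\<And>x y r. x \<in> Ea \<Longrightarrow> r \<in> Er \<Longrightarrow> B (br x y) r = 0"
    and H1: "\<And>x x' w. x \<in> Ea \<Longrightarrow> x' \<in> Ea \<Longrightarrow> w \<in> Ea \<union> Er \<Longrightarrow> B (br x x') w = 0"
    and H2: "\<And>x y w. x \<in> Ea \<Longrightarrow> w \<in> Ea \<union> Er \<Longrightarrow> B (br x (br x y)) w = 0"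
  shows "(\<Sum>x\<in>Ea. ricE E x) \<ge> 0"
proof -
  have zr: "br y z0 = 0" for y using z0(2)[of y] br_anti[of y z0] by simp
  have sE: "(\<Sum>e\<in>E. f e) = f z0 + (\<Sum>e\<in>Ea. f e) + (\<Sum>e\<in>Er. f e)" for f :: "'g \<Rightarrow> real"
    unfolding E_def using z0(3) fin disj by (simp add: sum.union_disjoint)
  have sEa: "(\<Sum>e\<in>Ea. B e e * f e) = (\<Sum>e\<in>Ea. f e)" for f :: "'g \<Rightarrow> real"
    using eps by (intro sum.cong) auto
  have sEr: "(\<Sum>e\<in>Er. B e e * f e) = (\<Sum>e\<in>Er. f e)" for f :: "'g \<Rightarrow> real"
    using eps by (intro sum.cong) auto
  have pars: "B y y = - (B y z0)\<^sup>2 + (\<Sum>g\<in>Ea. (B y g)\<^sup>2) + (\<Sum>g\<in>Er. (B y g)\<^sup>2)" for y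
  proof -
    have "B y y = (\<Sum>g\<in>E. B g g * B y g * B y g)" using onb_parseval2[OF EU, of y y] by simp
    also have "\<dots> = - (B y z0)\<^sup>2 + (\<Sum>g\<in>Ea. (B y g)\<^sup>2) + (\<Sum>g\<in>Er. (B y g)\<^sup>2)"
      unfolding sE using sEa[of "\<lambda>g. B y g * B y g"] sEr[of "\<lambda>g. B y g * B y g"] z0(1)
      by (simp add: mult.assoc power2_eq_square)
    finally show ?thesis .
  qed
  define \<omega> where "\<omega> x e = B (br x e) z0" for x e
  define N where "N x = (\<Sum>e\<in>Er. \<Sum>g\<in>Ea. (B (br x e) g)\<^sup>2)" for x
  define M1 where "M1 x = (\<Sum>e\<in>Ea. \<Sum>f\<in>Er. (B (br e f) x)\<^sup>2)" for x
  define M2 where "M2 x = (\<Sum>e\<in>Er. \<Sum>f\<in>Ea. (B (br e f) x)\<^sup>2)" for x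
  define Q where "Q x = (\<Sum>e\<in>Er. \<Sum>f\<in>Er. (B (br e f) x)\<^sup>2)" for x
  define Pp where "Pp x = (\<Sum>e\<in>Ea. (\<omega> x e)\<^sup>2) / 2 + (\<Sum>e\<in>Er. (\<omega> x e)\<^sup>2) / 2 + Q x / 4" for x
  have per: "ricE E x = Pp x - N x / 2 + (M1 x + M2 x) / 4" if x: "x \<in> Ea" for x
  proof -
    have T1a: "B (br x e) (br x e) = - (\<omega> x e)\<^sup>2" if "e \<in> Ea" for e
    proof -
      have "(\<Sum>g\<in>Ea. (B (br x e) g)\<^sup>2) = 0" using H1[OF x that] by (intro sum.neutral) auto
      moreover have "(\<Sum>g\<in>Er. (B (br x e) g)\<^sup>2) = 0" using H0[OF x] by (intro sum.neutral) auto
      ultimately show ?thesis using pars[of "br x e"] by (simp add: \<omega>_def)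
    qed
    have T1r: "B (br x e) (br x e) = - (\<omega> x e)\<^sup>2 + (\<Sum>g\<in>Ea. (B (br x e) g)\<^sup>2)" for e
    proof -
      have "(\<Sum>g\<in>Er. (B (br x e) g)\<^sup>2) = 0" using H0[OF x] by (intro sum.neutral) auto
      then show ?thesis using pars[of "br x e"] by (simp add: \<omega>_def)
    qed
    have T1: "(\<Sum>e\<in>E. B e e * B (br x e) (br x e)) = - (\<Sum>e\<in>Ea. (\<omega> x e)\<^sup>2) - (\<Sum>e\<in>Er. (\<omega> x e)\<^sup>2) + N x"
    proof -
      have "(\<Sum>e\<in>E. B e e * B (br x e) (br x e)) = (\<Sum>e\<in>Ea. B (br x e) (br x e)) + (\<Sum>e\<in>Er. B (br x e) (br x e))"
        unfolding sE sEa sEr by (simp add: zr)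
      also have "(\<Sum>e\<in>Ea. B (br x e) (br x e)) = (\<Sum>e\<in>Ea. - (\<omega> x e)\<^sup>2)" using T1a by (intro sum.cong) auto
      also have "(\<Sum>e\<in>Er. B (br x e) (br x e)) = (\<Sum>e\<in>Er. - (\<omega> x e)\<^sup>2 + (\<Sum>g\<in>Ea. (B (br x e) g)\<^sup>2))"
        using T1r by (intro sum.cong) auto
      finally show ?thesis unfolding N_def by (simp add: sum.distrib sum_negf sum_subtractf)
    qed
    have T2: "(\<Sum>e\<in>E. B e e * B (br x (br x e)) e) = 0"
      unfolding sE sEa sEr using H2[OF x] by (simp add: zr)
    have T3: "(\<Sum>e\<in>E. \<Sum>f\<in>E. B e e * B f f * (B (br e f) x)\<^sup>2) = M1 x + M2 x + Q x"
    proof -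
      have inner: "(\<Sum>f\<in>E. B e e * B f f * (B (br e f) x)\<^sup>2) = (\<Sum>f\<in>Ea. (B (br e f) x)\<^sup>2) + (\<Sum>f\<in>Er. (B (br e f) x)\<^sup>2)"
        if "e \<in> Ea \<union> Er" for e
        unfolding sE using eps[OF that] sEa[of "\<lambda>f. (B (br e f) x)\<^sup>2"] sEr[of "\<lambda>f. (B (br e f) x)\<^sup>2"]
        by (simp add: zr mult.assoc)
      have aa: "(\<Sum>e\<in>Ea. \<Sum>f\<in>Ea. (B (br e f) x)\<^sup>2) = 0"
        using H1 x by (intro sum.neutral ballI) auto
      have "(\<Sum>e\<in>E. \<Sum>f\<in>E. B e e * B f f * (B (br e f) x)\<^sup>2) =
          (\<Sum>e\<in>Ea. \<Sum>f\<in>E. B e e * B f f * (B (br e f) x)\<^sup>2) + (\<Sum>e\<in>Er. \<Sum>f\<in>E. B e e * B f f * (B (br e f) x)\<^sup>2)"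
        using sE[of "\<lambda>e. \<Sum>f\<in>E. B e e * B f f * (B (br e f) x)\<^sup>2"] by (simp add: z0(2))
      also have "\<dots> = (\<Sum>e\<in>Ea. (\<Sum>f\<in>Ea. (B (br e f) x)\<^sup>2) + (\<Sum>f\<in>Er. (B (br e f) x)\<^sup>2)) +
          (\<Sum>e\<in>Er. (\<Sum>f\<in>Ea. (B (br e f) x)\<^sup>2) + (\<Sum>f\<in>Er. (B (br e f) x)\<^sup>2))"
        using inner by (intro arg_cong2[where f="(+)"] sum.cong refl) auto
      finally have "(\<Sum>e\<in>E. \<Sum>f\<in>E. B e e * B f f * (B (br e f) x)\<^sup>2) =
          (\<Sum>e\<in>Ea. (\<Sum>f\<in>Ea. (B (br e f) x)\<^sup>2) + (\<Sum>f\<in>Er. (B (br e f) x)\<^sup>2)) +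
          (\<Sum>e\<in>Er. (\<Sum>f\<in>Ea. (B (br e f) x)\<^sup>2) + (\<Sum>f\<in>Er. (B (br e f) x)\<^sup>2))" .
      then show ?thesis unfolding M1_def M2_def Q_def using aa by (simp add: sum.distrib)
    qed
    show ?thesis unfolding ricE_def T1 T2 T3 Pp_def by (simp add: field_simps)
  qed
  have sq_anti: "(B (br e f) x)\<^sup>2 = (B (br f e) x)\<^sup>2" for e f x
    by (subst br_anti) (simp add: power2_eq_square)
  have SN: "(\<Sum>x\<in>Ea. N x) = (\<Sum>x\<in>Ea. M1 x)"
  proof -
    have "(\<Sum>x\<in>Ea. N x) = (\<Sum>x\<in>Ea. \<Sum>e\<in>Er. \<Sum>g\<in>Ea. (B (br x e) g)\<^sup>2)" unfolding N_def ..
    also have "\<dots> = (\<Sum>x\<in>Ea. \<Sum>g\<in>Ea. \<Sum>e\<in>Er. (B (br x e) g)\<^sup>2)" by (intro sum.cong refl sum.swap)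
    also have "\<dots> = (\<Sum>g\<in>Ea. \<Sum>x\<in>Ea. \<Sum>e\<in>Er. (B (br x e) g)\<^sup>2)" by (rule sum.swap)
    also have "\<dots> = (\<Sum>x\<in>Ea. M1 x)" unfolding M1_def ..
    finally show ?thesis .
  qed
  have SM: "M2 x = M1 x" for x
  proof -
    have "M2 x = (\<Sum>e\<in>Er. \<Sum>f\<in>Ea. (B (br f e) x)\<^sup>2)" unfolding M2_def by (simp only: sq_anti[of _ _ x])
    also have "\<dots> = M1 x" unfolding M1_def by (rule sum.swap)
    finally show ?thesis .
  qed
  have "(\<Sum>x\<in>Ea. ricE E x) = (\<Sum>x\<in>Ea. Pp x - N x / 2 + (M1 x + M2 x) / 4)"
    using per by (intro sum.cong) auto
  also have "\<dots> = (\<Sum>x\<in>Ea. Pp x) - (\<Sum>x\<in>Ea. N x) / 2 + ((\<Sum>x\<in>Ea. M1 x) + (\<Sum>x\<in>Ea. M2 x)) / 4"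
    by (simp add: sum.distrib sum_subtractf sum_divide_distrib[symmetric])
  also have "\<dots> = (\<Sum>x\<in>Ea. Pp x)" using SN SM by (simp add: field_simps)
  also have "\<dots> \<ge> 0" unfolding Pp_def Q_def by (intro sum_nonneg add_nonneg_nonneg divide_nonneg_nonneg) auto
  finally show ?thesis .
qed

end

context mla
begin

lemma center_sub: "subspace (center br)"
  unfolding subspace_def center_def by simp

lemma center_l: "z \<in> center br \<Longrightarrow> br z x = 0" by (simp add: center_def)
lemma center_r: "z \<in> center br \<Longrightarrow> br x z = 0" using br_anti[of x z] by (simp add: center_def)

lemma neg_from_null:
  assumes "B v v = 0" "B v w \<noteq> 0"
  shows "B (v + (- B v w / (\<bar>B w w\<bar> + 1)) *\<^sub>R w) (v + (- B v w / (\<bar>B w w\<bar> + 1)) *\<^sub>R w) < 0"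
proof -
  define b where "b = B v w"
  define c where "c = B w w"
  define d where "d = \<bar>c\<bar> + 1"
  define t where "t = - b / d"
  have d: "d > 0" unfolding d_def by simp
  have "B (v + t *\<^sub>R w) (v + t *\<^sub>R w) = 2 * t * b + t * t * c"
    using assms(1) unfolding b_def c_def by (simp add: Bsym[of w v] algebra_simps)
  also have "\<dots> * (d * d) = - 2 * b * b * d + b * b * c"
    unfolding t_def using d by (simp add: field_simps)
  also have "\<dots> < 0"
  proof -
    have "b \<noteq> 0" using assms(2) unfolding b_def .
    then have "b * b > 0" by (simp add: zero_less_mult_iff linorder_neq_iff disj_commute)
    moreover have "c \<le> \<bar>c\<bar>" by simp
    ultimately have "b * b * c \<le> b * b * \<bar>c\<bar>" by (intro mult_left_mono) auto
    moreover have "- 2 * b * b * d + b * b * \<bar>c\<bar> = - (b * b) * (\<bar>c\<bar> + 2)" unfolding d_def by (simp add: algebra_simps)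
    moreover have "- (b * b) * (\<bar>c\<bar> + 2) < 0" using \<open>b * b > 0\<close> by (simp add: mult_pos_pos)
    ultimately show ?thesis by linarith
  qed
  finally have "B (v + t *\<^sub>R w) (v + t *\<^sub>R w) * (d * d) < 0" .
  then have "B (v + t *\<^sub>R w) (v + t *\<^sub>R w) < 0" using d by (simp add: mult_less_0_iff)
  then show ?thesis unfolding t_def b_def d_def c_def .
qed

lemma no_neg_perp:
  assumes lor: "lorentzian B" and z0: "B z0 z0 = -1" and u: "B u z0 = 0" "B u u < 0"
  shows False
proof -
  define V where "V = span {z0, u}"
  have sV: "subspace V" unfolding V_def by simp
  have nd: "neg_definite_on B V"
    unfolding neg_definite_on_def
  proof (intro ballI impI)
    fix x assume "x \<in> V" "x \<noteq> 0"
    then obtain a b where "x - a *\<^sub>R z0 = b *\<^sub>R u"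
      unfolding V_def span_insert[of z0] span_singleton by auto
    then have x: "x = a *\<^sub>R z0 + b *\<^sub>R u" by (simp add: algebra_simps)
    have "B x x = - (a * a) + b * b * B u u" unfolding x using z0 u(1) by (simp add: Bsym[of z0 u] algebra_simps)
    moreover have "a \<noteq> 0 \<or> b \<noteq> 0" using \<open>x \<noteq> 0\<close> x by auto
    moreover have "b * b * B u u \<le> 0" using u(2) by (simp add: mult_nonneg_nonpos)
    moreover have "b \<noteq> 0 \<Longrightarrow> b * b * B u u < 0"
    proof -
      assume "b \<noteq> 0" then have "b * b > 0" by (simp add: zero_less_mult_iff linorder_neq_iff disj_commute)
      then show ?thesis using u(2) by (simp add: mult_pos_neg)
    qed
    moreover have "a \<noteq> 0 \<Longrightarrow> a * a > 0" by (metis linorder_neq_iff mult_neg_neg mult_pos_pos)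
    ultimately show "B x x < 0" by (smt (verit) zero_le_square)
  qed
  have "dim V \<le> 1" using lor sV nd unfolding lorentzian_def by blast
  moreover have "card {z0, u} \<le> dim V"
  proof (rule independent_card_le_dim)
    show "{z0, u} \<subseteq> V" unfolding V_def by (simp add: span_base)
    have u0: "u \<noteq> 0" using u(2) by auto
    have "z0 \<notin> span {u}"
    proof
      assume "z0 \<in> span {u}"
      then obtain k where "z0 = k *\<^sub>R u" by (auto simp: span_singleton)
      then have "B z0 z0 = k * B u z0" by simp
      then show False using z0 u(1) by simp
    qed
    then show "independent {z0, u}" using u0 by (simp add: independent_insert)
  qed
  moreover have "z0 \<noteq> u" using z0 u(1) by auto
  ultimately show False by simp
qed

lemma W_pos:
  assumes lor: "lorentzian B" and z0: "B z0 z0 = -1"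
  shows "pos_definite_on B {w. B w z0 = 0}"
  unfolding pos_definite_on_def
proof (intro ballI impI)
  fix w assume w: "w \<in> {w. B w z0 = 0}" "w \<noteq> 0"
  show "B w w > 0"
  proof (rule ccontr)
    assume "\<not> B w w > 0"
    then consider "B w w < 0" | "B w w = 0" by linarith
    then show False
    proof cases
      case 1 then show False using no_neg_perp[OF lor z0] w by auto
    next
      case 2
      have "nondegenerate_on B UNIV" using lor by (simp add: lorentzian_def)
      then obtain y where y: "B w y \<noteq> 0" using w(2) unfolding nondegenerate_on_def by auto
      define y' where "y' = y + B y z0 *\<^sub>R z0"
      have y'z: "B y' z0 = 0" unfolding y'_def using z0 by simp
      have wy': "B w y' = B w y" unfolding y'_def using w(1) by (simp add: Bsym[of w z0])
      define t where "t = - B w y' / (\<bar>B y' y'\<bar> + 1)"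
      have neg: "B (w + t *\<^sub>R y') (w + t *\<^sub>R y') < 0"
        unfolding t_def by (rule neg_from_null) (use 2 wy' y in auto)
      have "B (w + t *\<^sub>R y') z0 = 0" using w(1) y'z by simp
      then show False using no_neg_perp[OF lor z0 _ neg] by simp
    qed
  qed
qed

lemma get_z0:
  assumes nd: "nondegenerate_on B (center br)" and np: "\<not> pos_definite_on B (center br)"
  shows "\<exists>z0\<in>center br. B z0 z0 = -1"
proof -
  have sZ: "subspace (center br)" by (rule center_sub)
  obtain v where v: "v \<in> center br" "v \<noteq> 0" "B v v \<le> 0" using np unfolding pos_definite_on_def by force
  have "\<exists>x\<in>center br. B x x < 0"
  proof (cases "B v v < 0")
    case True then show ?thesis using v by auto
  next
    case False
    then have vv: "B v v = 0" using v by linarith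
    obtain w where w: "w \<in> center br" "B v w \<noteq> 0" using nd v unfolding nondegenerate_on_def by auto
    define t where "t = - B v w / (\<bar>B w w\<bar> + 1)"
    have "B (v + t *\<^sub>R w) (v + t *\<^sub>R w) < 0" unfolding t_def by (rule neg_from_null[OF vv w(2)])
    moreover have "v + t *\<^sub>R w \<in> center br" using sZ v w by (simp add: subspace_add subspace_scale)
    ultimately show ?thesis by blast
  qed
  then obtain x where x: "x \<in> center br" "B x x < 0" by auto
  define z where "z = (1 / sqrt (- B x x)) *\<^sub>R x"
  have "B z z = -1" using x(2) unfolding z_def by (simp add: field_simps)
  moreover have "z \<in> center br" unfolding z_def using sZ x(1) by (simp add: subspace_scale)
  ultimately show ?thesis by auto
qed

end

context mla
begin

lemma ds_eq: "derived_series br k = dsV UNIV k"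
  by (induction k) auto

lemma ds_sub: "subspace (dsV V k) \<or> k = 0"
  by (cases k) auto

lemma dsU_sub: "subspace (dsV UNIV k)"
  by (cases k) (auto simp: subspace_UNIV)

lemma ds_ideal: "y \<in> dsV UNIV k \<Longrightarrow> br x y \<in> dsV UNIV k"
proof (induction k arbitrary: x y)
  case 0 then show ?case by simp
next
  case (Suc k)
  have "y \<in> span {br a b | a b. a \<in> dsV UNIV k \<and> b \<in> dsV UNIV k}" using Suc.prems by simp
  then show ?case
  proof (rule span_ind)
    show "br x 0 \<in> dsV UNIV (Suc k)" using dsU_sub[of "Suc k"] subspace_0 by auto
    fix r z y assume z: "z \<in> {br a b | a b. a \<in> dsV UNIV k \<and> b \<in> dsV UNIV k}" and y: "br x y \<in> dsV UNIV (Suc k)"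
    then obtain a b where ab: "z = br a b" "a \<in> dsV UNIV k" "b \<in> dsV UNIV k" by auto
    have "br x (br a b) = br (br x a) b + br a (br x b)"
      using jacobi[of x a b] by (simp add: br_anti[of "br b x"] br_anti[of b x] br_anti[of "br x a" b] algebra_simps)
    moreover have "br (br x a) b \<in> dsV UNIV (Suc k)" "br a (br x b) \<in> dsV UNIV (Suc k)"
      using Suc.IH ab by (auto intro!: span_base)
    ultimately have "br x z \<in> dsV UNIV (Suc k)" using ab dsU_sub[of "Suc k"] by (simp add: subspace_add)
    then show "br x (r *\<^sub>R z + y) \<in> dsV UNIV (Suc k)" using y dsU_sub[of "Suc k"] by (simp add: subspace_add subspace_scale)
  qed
qed

lemma ds_ideal_l: "d \<in> dsV UNIV k \<Longrightarrow> br d y \<in> dsV UNIV k"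
  using ds_ideal[of d k y] dsU_sub[of k] br_anti[of d y] by (simp add: subspace_neg)

lemma first_exit: "\<not> Q 0 \<Longrightarrow> Q (N::nat) \<Longrightarrow> \<exists>m. \<not> Q m \<and> Q (Suc m)"
  by (induction N) auto

lemma ric_any: assumes "onb UNIV E" "unimodular br" shows "B (ricci br B u) u = ricE E u"
proof -
  interpret mlaE br B E by unfold_locales (rule assms(1))
  show ?thesis by (rule milnor[OF assms(2)])
qed

lemma onb_add_z0: assumes z0: "B z0 z0 = -1" and F: "onb {w. B w z0 = 0} F"
  shows "onb UNIV (insert z0 F)"
proof -
  have "onb UNIV ({z0} \<union> F)"
  proof (rule onb_union[OF onb_single F])
    show "B z0 z0 = 1 \<or> B z0 z0 = -1" using z0 by simp
    show "B x y = 0" if "x \<in> span {z0}" "y \<in> {w. B w z0 = 0}" for x y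
      using that by (auto simp: span_singleton Bsym[of z0])
    show "\<exists>x\<in>span {z0}. \<exists>y\<in>{w. B w z0 = 0}. v = x + y" if "v \<in> UNIV" for v
    proof (intro bexI)
      show "v = (- B v z0) *\<^sub>R z0 + (v + B v z0 *\<^sub>R z0)" by simp
      show "(- B v z0) *\<^sub>R z0 \<in> span {z0}" by (rule span_scale) (simp add: span_base)
      show "v + B v z0 *\<^sub>R z0 \<in> {w. B w z0 = 0}" using z0 by simp
    qed
  qed auto
  then show ?thesis by simp
qed

lemma setup_basis:
  assumes lor: "lorentzian B" and z0: "B z0 z0 = -1"
  shows "\<exists>EW. onb {w. B w z0 = 0} EW \<and> (\<forall>e\<in>EW. B e e = 1) \<and> onb UNIV (insert z0 EW) \<and> z0 \<notin> EW"
proof -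
  have sW: "subspace {w. B w z0 = 0}" unfolding subspace_def by simp
  obtain EW where EW: "onb {w. B w z0 = 0} EW" "\<forall>e\<in>EW. B e e = 1"
    using onb_exists_pos[OF sW W_pos[OF lor z0]] by auto
  have "z0 \<notin> EW" using onb_sub[OF EW(1)] z0 by auto
  then show ?thesis using EW onb_add_z0[OF z0 EW(1)] by auto
qed

lemma ricz_terms:
  assumes z0c: "\<And>y. br z0 y = 0" and EW: "\<forall>e\<in>EW. B e e = 1"
    and ef: "e \<in> insert z0 EW" "f \<in> insert z0 EW"
  shows "B e e * B f f * (B (br e f) z0)\<^sup>2 \<ge> 0"
proof -
  have zr: "br y z0 = 0" for y using z0c[of y] br_anti[of y z0] by simp
  show ?thesis
  proof (cases "e = z0 \<or> f = z0")
    case True then show ?thesis using z0c zr by auto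
  next
    case False then show ?thesis using ef EW by auto
  qed
qed

lemma ricz:
  assumes z0c: "\<And>y. br z0 y = 0"
  shows "ricE E z0 = (\<Sum>e\<in>E. \<Sum>f\<in>E. B e e * B f f * (B (br e f) z0)\<^sup>2) / 4"
  unfolding ricE_def using z0c by simp

lemma c_nonpos:
  assumes lor: "lorentzian B" and um: "unimodular br"
    and c: "\<And>u. B (ricci br B u) u = c * B u u"
    and z0: "z0 \<in> center br" "B z0 z0 = -1"
  shows "c \<le> 0"
proof -
  obtain EW where EW: "onb {w. B w z0 = 0} EW" "\<forall>e\<in>EW. B e e = 1" "onb UNIV (insert z0 EW)" "z0 \<notin> EW"
    using setup_basis[OF lor z0(2)] by auto
  have z0c: "br z0 y = 0" for y using center_l[OF z0(1)] .
  have "ricE (insert z0 EW) z0 \<ge> 0"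
    unfolding ricz[OF z0c] using ricz_terms[OF z0c EW(2)] by (intro divide_nonneg_nonneg sum_nonneg) auto
  moreover have "ricE (insert z0 EW) z0 = - c" using ric_any[OF EW(3) um, of z0] c[of z0] z0(2) by simp
  ultimately show ?thesis by simp
qed

lemma c_nonneg:
  assumes lor: "lorentzian B" and sol: "solvable br" and um: "unimodular br"
    and c: "\<And>u. B (ricci br B u) u = c * B u u"
    and z0: "z0 \<in> center br" "B z0 z0 = -1"
  shows "c \<ge> 0"
proof (rule ccontr)
  assume "\<not> c \<ge> 0" then have cneg: "c < 0" by simp
  define W where "W = {w. B w z0 = 0}"
  have sW: "subspace W" unfolding W_def subspace_def by simp
  have pW: "pos_definite_on B W" unfolding W_def by (rule W_pos[OF lor z0(2)])
  have z0c: "br z0 y = 0" for y using center_l[OF z0(1)] .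
  have zr: "br y z0 = 0" for y using center_r[OF z0(1)] .
  obtain EW where EW: "onb W EW" "\<forall>e\<in>EW. B e e = 1" "onb UNIV (insert z0 EW)" "z0 \<notin> EW"
    using setup_basis[OF lor z0(2)] unfolding W_def by auto
  have "EW \<noteq> {}"
  proof
    assume "EW = {}"
    then have "ricE (insert z0 EW) z0 = 0" unfolding ricz[OF z0c] by (simp add: z0c)
    moreover have "ricE (insert z0 EW) z0 = - c" using ric_any[OF EW(3) um, of z0] c[of z0] z0(2) by simp
    ultimately show False using cneg by simp
  qed
  then obtain w0 where w0: "w0 \<in> EW" by auto
  have w0W: "w0 \<in> W" "B w0 w0 = 1" using w0 EW(1,2) onb_sub by auto
  have spz: "B v w = 0" if "v \<in> span {z0}" "w \<in> W" for v w
    using that unfolding W_def by (auto simp: span_singleton Bsym[of z0])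
  define Q where "Q k = (dsV UNIV k \<subseteq> span {z0})" for k
  have "\<not> Q 0"
  proof
    assume "Q 0"
    then have "w0 \<in> span {z0}" unfolding Q_def by auto
    then have "B w0 w0 = 0" using spz w0W(1) by auto
    then show False using w0W by simp
  qed
  moreover obtain N where "derived_series br N = {0}" using sol unfolding solvable_def by auto
  then have "Q N" unfolding Q_def ds_eq by (simp add: span_zero)
  ultimately obtain m where m: "\<not> Q m" "Q (Suc m)" using first_exit[of Q N] by auto
  define Dm where "Dm = dsV UNIV m"
  have sDm: "subspace Dm" unfolding Dm_def by (rule dsU_sub)
  define I where "I = {d + t *\<^sub>R z0 | d t. d \<in> Dm}"
  define a where "a = {w \<in> W. w \<in> I}"
  have sI: "subspace I"
    unfolding subspace_def I_def
  proof (intro conjI allI impI ballI)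
    show "0 \<in> {d + t *\<^sub>R z0 |d t. d \<in> Dm}" using sDm subspace_0 by (auto intro!: exI[of _ 0])
    fix x y assume "x \<in> {d + t *\<^sub>R z0 |d t. d \<in> Dm}" "y \<in> {d + t *\<^sub>R z0 |d t. d \<in> Dm}"
    then obtain d1 t1 d2 t2 where "x = d1 + t1 *\<^sub>R z0" "d1 \<in> Dm" "y = d2 + t2 *\<^sub>R z0" "d2 \<in> Dm" by auto
    then show "x + y \<in> {d + t *\<^sub>R z0 |d t. d \<in> Dm}" using sDm
      by (auto intro!: exI[of _ "d1 + d2"] exI[of _ "t1 + t2"] simp: subspace_add algebra_simps)
  next
    fix r x assume "x \<in> {d + t *\<^sub>R z0 |d t. d \<in> Dm}"
    then obtain d1 t1 where "x = d1 + t1 *\<^sub>R z0" "d1 \<in> Dm" by auto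
    then show "r *\<^sub>R x \<in> {d + t *\<^sub>R z0 |d t. d \<in> Dm}" using sDm
      by (auto intro!: exI[of _ "r *\<^sub>R d1"] exI[of _ "r * t1"] simp: subspace_scale algebra_simps)
  qed
  have sa: "subspace a" using sI sW unfolding a_def subspace_def by auto
  have aW: "a \<subseteq> W" unfolding a_def by auto
  have DmI: "d \<in> I" if "d \<in> Dm" for d
  proof -
    have "d = d + 0 *\<^sub>R z0" by simp
    then show ?thesis unfolding I_def using that by blast
  qed
  have Ia: "v + B v z0 *\<^sub>R z0 \<in> a" if v: "v \<in> I" for v
  proof -
    obtain d t where "v = d + t *\<^sub>R z0" "d \<in> Dm" using v unfolding I_def by auto
    then have "v + B v z0 *\<^sub>R z0 \<in> I" unfolding I_def
      by (auto intro!: exI[of _ d] exI[of _ "t + B v z0"] simp: algebra_simps)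
    moreover have "v + B v z0 *\<^sub>R z0 \<in> W" unfolding W_def using z0(2) by simp
    ultimately show ?thesis unfolding a_def by auto
  qed
  have adec: "\<exists>d t. x = d + t *\<^sub>R z0 \<and> d \<in> Dm" if "x \<in> a" for x using that unfolding a_def I_def by auto
  have brI: "br x y \<in> Dm" if x: "x \<in> a" for x y
  proof -
    obtain d t where "x = d + t *\<^sub>R z0" "d \<in> Dm" using adec[OF x] by auto
    then show ?thesis unfolding Dm_def by (simp add: z0c ds_ideal_l)
  qed
  have Dsuc: "B (br d d') w = 0" if "d \<in> Dm" "d' \<in> Dm" "w \<in> W" for d d' w
  proof -
    have "br d d' \<in> dsV UNIV (Suc m)" using that unfolding Dm_def by (auto intro!: span_base)
    then have "br d d' \<in> span {z0}" using m(2) unfolding Q_def by auto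
    then show ?thesis using spz that(3) by auto
  qed
  have H1': "B (br x x') w = 0" if xx: "x \<in> a" "x' \<in> a" "w \<in> W" for x x' w
  proof -
    obtain d t where d: "x = d + t *\<^sub>R z0" "d \<in> Dm" using adec[OF xx(1)] by auto
    obtain d' t' where d': "x' = d' + t' *\<^sub>R z0" "d' \<in> Dm" using adec[OF xx(2)] by auto
    show ?thesis using Dsuc[OF d(2) d'(2) xx(3)] unfolding d(1) d'(1) by (simp add: z0c zr)
  qed
  have H2': "B (br x (br x y)) w = 0" if xx: "x \<in> a" "w \<in> W" for x y w
  proof -
    obtain d t where d: "x = d + t *\<^sub>R z0" "d \<in> Dm" using adec[OF xx(1)] by auto
    have "br d y \<in> Dm" using d(2) unfolding Dm_def by (rule ds_ideal_l)
    then show ?thesis using Dsuc[OF d(2) _ xx(2)] unfolding d(1) by (simp add: z0c zr)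
  qed
  obtain d0 where d0: "d0 \<in> Dm" "d0 \<notin> span {z0}" using m(1) unfolding Q_def Dm_def by auto
  define w1 where "w1 = d0 + B d0 z0 *\<^sub>R z0"
  have w1a: "w1 \<in> a" unfolding w1_def by (rule Ia[OF DmI[OF d0(1)]])
  have w1nz: "w1 \<noteq> 0"
  proof
    assume "w1 = 0"
    then have "d0 = (- B d0 z0) *\<^sub>R z0" unfolding w1_def by (simp add: algebra_simps eq_neg_iff_add_eq_0)
    then have "d0 \<in> span {z0}" by (metis span_base span_scale singletonI)
    then show False using d0(2) by simp
  qed
  have pa: "pos_definite_on B a" using pW aW unfolding pos_definite_on_def by auto
  obtain Ea where Ea: "onb a Ea" "\<forall>e\<in>Ea. B e e = 1" using onb_exists_pos[OF sa pa] by auto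
  have "Ea \<noteq> {}"
  proof
    assume "Ea = {}"
    then have "w1 = 0" using onb_exp[OF Ea(1) w1a] by simp
    then show False using w1nz by simp
  qed
  obtain Er where Er: "onb {w \<in> W. \<forall>u\<in>a. B w u = 0} Er" "\<forall>e\<in>Er. B e e = 1" "onb W (Ea \<union> Er)"
    using onb_extend[OF sW pW Ea(1) aW sa] by auto
  have EaW: "e \<in> W" "e \<in> a" if "e \<in> Ea" for e using that onb_sub[OF Ea(1)] aW by auto
  have ErW: "e \<in> W" "\<forall>u\<in>a. B e u = 0" if "e \<in> Er" for e using that onb_sub[OF Er(1)] by auto
  have E'U: "onb UNIV (insert z0 (Ea \<union> Er))" using onb_add_z0[OF z0(2) Er(3)[unfolded W_def]] .
  have nonneg: "(\<Sum>x\<in>Ea. ricE (insert z0 (Ea \<union> Er)) x) \<ge> 0"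
  proof (rule ideal_sum_nonneg[OF E'U z0(2) z0c])
    show "z0 \<notin> Ea \<union> Er" using EaW ErW z0(2) unfolding W_def by force
    show "Ea \<inter> Er = {}" by (rule onb_disj[OF Ea(1) Er(1)]) (auto simp: Bsym)
    show "finite Ea" "finite Er" using onb_finite Ea Er by auto
    show "B e e = 1" if "e \<in> Ea \<union> Er" for e using that Ea(2) Er(2) by auto
    show "B (br x y) r = 0" if "x \<in> Ea" "r \<in> Er" for x y r
    proof -
      define v where "v = br x y"
      have vI: "v \<in> I" unfolding v_def using DmI brI EaW(2)[OF that(1)] by auto
      have "B r (v + B v z0 *\<^sub>R z0) = 0" using ErW(2)[OF that(2)] Ia[OF vI] by auto
      moreover have "B r z0 = 0" using ErW(1)[OF that(2)] unfolding W_def by simp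
      ultimately show ?thesis unfolding v_def[symmetric] by (simp add: Bsym[of r])
    qed
    show "B (br x x') w = 0" if "x \<in> Ea" "x' \<in> Ea" "w \<in> Ea \<union> Er" for x x' w
      using H1' EaW ErW that by blast
    show "B (br x (br x y)) w = 0" if "x \<in> Ea" "w \<in> Ea \<union> Er" for x y w
      using H2' EaW ErW that by blast
  qed
  have "(\<Sum>x\<in>Ea. ricE (insert z0 (Ea \<union> Er)) x) = (\<Sum>x\<in>Ea. c)"
  proof (intro sum.cong refl)
    fix x assume "x \<in> Ea"
    show "ricE (insert z0 (Ea \<union> Er)) x = c" using ric_any[OF E'U um, of x] c[of x] Ea(2) \<open>x \<in> Ea\<close> by simp
  qed
  also have "\<dots> = c * card Ea" by simp
  also have "\<dots> < 0" using cneg \<open>Ea \<noteq> {}\<close> onb_finite[OF Ea(1)] by (simp add: mult_neg_pos card_gt_0_iff)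
  finally show False using nonneg by simp
qed

end

context mla
begin

lemma brackets_perp:
  assumes lor: "lorentzian B" and um: "unimodular br"
    and c: "\<And>u. B (ricci br B u) u = 0"
    and z0: "z0 \<in> center br" "B z0 z0 = -1"
  shows "B (br x y) z0 = 0"
proof -
  obtain EW where EW: "onb {w. B w z0 = 0} EW" "\<forall>e\<in>EW. B e e = 1" "onb UNIV (insert z0 EW)" "z0 \<notin> EW"
    using setup_basis[OF lor z0(2)] by auto
  define E where "E = insert z0 EW"
  have fE: "finite E" using onb_finite[OF EW(3)] unfolding E_def .
  have z0c: "br z0 y = 0" for y using center_l[OF z0(1)] .
  have zr: "br y z0 = 0" for y using center_r[OF z0(1)] .
  have "ricE E z0 = 0" using ric_any[OF EW(3) um, of z0] c[of z0] unfolding E_def by simp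
  then have s0: "(\<Sum>e\<in>E. \<Sum>f\<in>E. B e e * B f f * (B (br e f) z0)\<^sup>2) = 0" unfolding ricz[OF z0c] by simp
  have nn: "\<forall>e\<in>E. \<forall>f\<in>E. B e e * B f f * (B (br e f) z0)\<^sup>2 \<ge> 0"
    using ricz_terms[OF z0c EW(2)] unfolding E_def by blast
  have rows: "\<forall>e\<in>E. (\<Sum>f\<in>E. B e e * B f f * (B (br e f) z0)\<^sup>2) = 0"
    using s0 fE nn by (subst (asm) sum_nonneg_eq_0_iff) (auto intro: sum_nonneg)
  then have z: "B e e * B f f * (B (br e f) z0)\<^sup>2 = 0" if ef: "e \<in> E" "f \<in> E" for e f
  proof -
    have "(\<Sum>f\<in>E. B e e * B f f * (B (br e f) z0)\<^sup>2) = 0" using rows ef by auto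
    then have "\<forall>f\<in>E. B e e * B f f * (B (br e f) z0)\<^sup>2 = 0"
      using sum_nonneg_eq_0_iff[OF fE, of "\<lambda>f. B e e * B f f * (B (br e f) z0)\<^sup>2"] nn ef by auto
    then show ?thesis using ef by auto
  qed
  have ef0: "B (br e f) z0 = 0" if "e \<in> E" "f \<in> E" for e f
  proof (cases "e = z0 \<or> f = z0")
    case True then show ?thesis using z0c zr by auto
  next
    case False then have "B e e = 1" "B f f = 1" using that EW(2) unfolding E_def by auto
    then show ?thesis using z[OF that] by simp
  qed
  have "B (br x y) z0 = B (br (\<Sum>e\<in>E. (B e e * B x e) *\<^sub>R e) (\<Sum>f\<in>E. (B f f * B y f) *\<^sub>R f)) z0"
    using onb_exp[OF EW(3), of x] onb_exp[OF EW(3), of y] unfolding E_def by simp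
  also have "\<dots> = 0" by (simp add: ef0)
  finally show ?thesis .
qed

lemma ricE_insert_central:
  assumes "finite F" "z0 \<notin> F" "\<And>y. br z0 y = 0"
  shows "ricE (insert z0 F) x = ricE F x"
proof -
  have zr: "br y z0 = 0" for y using assms(3)[of y] br_anti[of y z0] by simp
  show ?thesis unfolding ricE_def using assms zr by (simp add: sum.insert)
qed

lemma main_case:
  assumes lor: "lorentzian B" and sol: "solvable br" and um: "unimodular br"
    and c0: "\<And>u. B (ricci br B u) u = 0"
    and z0: "z0 \<in> center br" "B z0 z0 = -1"
  shows "flat br B \<and>
     (\<exists>bI aS. lie_ideal br bI \<and> abelian_on br bI \<and>
        lie_subalgebra br aS \<and> abelian_on br aS \<and>
        bI \<inter> aS = {0} \<and> {x + y | x y. x \<in> bI \<and> y \<in> aS} = UNIV \<and>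
        (\<forall>u\<in>aS. LC br B u = br u) \<and> (\<forall>u\<in>bI. LC br B u = (\<lambda>v. 0)))"
proof -
  define W where "W = {w. B w z0 = 0}"
  have sW: "subspace W" unfolding W_def subspace_def by simp
  have pW: "pos_definite_on B W" unfolding W_def by (rule W_pos[OF lor z0(2)])
  have z0c: "br z0 y = 0" for y using center_l[OF z0(1)] .
  have zr: "br y z0 = 0" for y using center_r[OF z0(1)] .
  obtain EW where EW: "onb W EW" "\<forall>e\<in>EW. B e e = 1" "onb UNIV (insert z0 EW)" "z0 \<notin> EW"
    using setup_basis[OF lor z0(2)] unfolding W_def by auto
  interpret M: mlaE br B "insert z0 EW" by unfold_locales (rule EW(3))
  have fEW: "finite EW" using onb_finite[OF EW(1)] .
  have brW: "br x y \<in> W" for x y unfolding W_def using brackets_perp[OF lor um c0 z0] by simp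
  define pr where "pr x = x + B x z0 *\<^sub>R z0" for x
  have prW: "pr x \<in> W" for x unfolding pr_def W_def using z0(2) by simp
  have brpr: "br x y = br (pr x) (pr y)" for x y unfolding pr_def by (simp add: z0c zr)
  have brpr1: "br x y = br (pr x) y" for x y unfolding pr_def by (simp add: z0c)
  have Bpr: "B y (pr w) = B y w" if "y \<in> W" for y w using that unfolding pr_def W_def by simp
  have cW: "\<And>x y. x \<in> W \<Longrightarrow> y \<in> W \<Longrightarrow> br x y \<in> W" using brW by auto
  have umW: "(\<Sum>e\<in>EW. B (br x e) e) = 0" for x
  proof -
    have "trace (br x) = (\<Sum>e\<in>insert z0 EW. B e e * B (br x e) e)" by (rule M.trace_onb[OF br_linear])
    also have "\<dots> = (\<Sum>e\<in>EW. B (br x e) e)" using fEW EW(4) by (simp add: zr sum_pos_eps[OF EW(1) pW])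
    finally show ?thesis using um unfolding unimodular_def by simp
  qed
  have ds1: "dsV W (Suc 0) = dsV UNIV (Suc 0)"
  proof -
    have "{br x y | x y. x \<in> W \<and> y \<in> W} = {br x y | x y. x \<in> UNIV \<and> y \<in> UNIV}"
      using brpr prW by blast
    then show ?thesis by simp
  qed
  have dsS: "dsV W (Suc j) = dsV UNIV (Suc j)" for j
  proof (induction j)
    case 0 then show ?case by (rule ds1)
  next
    case (Suc j) then show ?case by (simp only: dsV.simps(2))
  qed
  obtain k where k: "dsV W k = {0}"
  proof -
    obtain N where N: "derived_series br N = {0}" using sol unfolding solvable_def by auto
    show ?thesis
    proof (cases N)
      case 0
      then have "W \<subseteq> {0}" using N by (simp add: ds_eq)
      then have "dsV W 0 = {0}" using sW subspace_0 by auto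
      then show ?thesis using that by blast
    next
      case (Suc j)
      have "dsV W (Suc j) = {0}" using N dsS[of j] unfolding ds_eq Suc by (simp only:)
      then show ?thesis using that by blast
    qed
  qed
  have rW: "ricP EW x = 0" if "x \<in> W" for x
  proof -
    have "ricP EW x = ricE EW x" using ricE_ricP[OF EW(1) pW] by simp
    also have "\<dots> = ricE (insert z0 EW) x" using ricE_insert_central[OF fEW EW(4) z0c] by simp
    also have "\<dots> = 0" using ric_any[OF EW(3) um, of x] c0[of x] by simp
    finally show ?thesis .
  qed
  define D where "D = dsV W (Suc 0)"
  have AKr: "(\<forall>a\<in>D. \<forall>b\<in>D. br a b = 0) \<and> (\<forall>u\<in>W. (\<forall>d\<in>D. B u d = 0) \<longrightarrow> (\<forall>v\<in>W. \<forall>w\<in>W. B (br u v) w = - B v (br u w)))"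
    unfolding D_def by (rule AK[OF sW pW cW EW(1) umW k rW])
  have abD: "br a b = 0" if "a \<in> D" "b \<in> D" for a b using AKr that by blast
  have skP: "B (br u v) w = - B v (br u w)" if "u \<in> W" "\<forall>d\<in>D. B u d = 0" "v \<in> W" "w \<in> W" for u v w
    using AKr that by blast
  have Ddef: "D = span {br x y | x y. x \<in> W \<and> y \<in> W}" unfolding D_def by simp
  have sD: "subspace D" unfolding Ddef by simp
  have "{br x y | x y. x \<in> W \<and> y \<in> W} \<subseteq> W" using cW by auto
  then have DW: "D \<subseteq> W" unfolding Ddef using sW by (rule span_minimal)
  have pD: "pos_definite_on B D" using pW DW unfolding pos_definite_on_def by auto
  have brD: "br x y \<in> D" for x y using brpr[of x y] prW unfolding Ddef by (auto intro!: span_base)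
  define A where "A = {u. \<forall>d\<in>D. B u d = 0}"
  have sA: "subspace A" unfolding A_def subspace_def by simp
  have DA: "B d a = 0" if "d \<in> D" "a \<in> A" for d a using that Bsym[of d a] unfolding A_def by auto
  have prA: "pr u \<in> A" if "u \<in> A" for u
    using that DW unfolding A_def pr_def W_def by (auto simp: Bsym[of z0])
  have skewA: "B (br u v) w = - B v (br u w)" if u: "u \<in> A" for u v w
  proof -
    have "B (br u v) w = B (br (pr u) (pr v)) (pr w)" using brpr[of u v] Bpr[OF brW] by simp
    also have "\<dots> = - B (pr v) (br (pr u) (pr w))" using skP[OF prW _ prW prW] prA[OF u] unfolding A_def by blast
    also have "B (pr v) (br (pr u) (pr w)) = B v (br u w)"
      using Bpr[OF brW, of "pr u" "pr w" v] brpr[of u w] by (simp add: Bsym)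
    finally show ?thesis .
  qed
  have abA: "br u u' = 0" if "u \<in> A" "u' \<in> A" for u u'
  proof -
    have "br (pr u) (pr u') = 0"
    proof (rule abelian_perp[OF pW cW])
      show "B (br (pr u) v) w = - B v (br (pr u) w)" if "v \<in> W" "w \<in> W" for v w
        using skP[OF prW _ that] prA \<open>u \<in> A\<close> unfolding A_def by blast
      show "pr u \<in> W" "pr u' \<in> W" by (rule prW)+
      show "B (pr u') d = 0" if "d \<in> dsV W (Suc 0)" for d using prA[OF \<open>u' \<in> A\<close>] that unfolding A_def D_def by auto
    qed
    then show ?thesis using brpr by simp
  qed
  obtain ED where ED: "onb D ED" "\<forall>e\<in>ED. B e e = 1" using onb_exists_pos[OF sD pD] by auto
  have dec: "\<exists>p q. v = p + q \<and> p \<in> D \<and> q \<in> A" for v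
  proof -
    obtain q p where "v = q + p" "\<forall>u\<in>D. B q u = 0" "p \<in> D"
      using decomp[OF ED(1) sD subspace_UNIV subset_UNIV UNIV_I, of v] by blast
    then show ?thesis unfolding A_def by (intro exI[of _ p] exI[of _ q]) auto
  qed
  have LCA: "LC br B u = br u" if u: "u \<in> A" for u
  proof
    fix v
    show "LC br B u v = br u v"
    proof (rule onb_eqI[OF EW(3)])
      fix w
      have 1: "B (br w v) u = 0" using DA[OF brD u] .
      have 2: "B (br w u) v = B (br u v) w"
        using skewA[OF u, of w v] br_anti[of w u] by (simp add: Bsym[of w])
      show "B (LC br B u v) w = B (br u v) w" unfolding M.LC_char using 1 2 by simp
    qed
  qed
  have LCD: "LC br B u = (\<lambda>v. 0)" if u: "u \<in> D" for u
  proof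
    fix v
    show "LC br B u v = 0"
    proof (rule onb_nondeg[OF EW(3)])
      fix w
      obtain vD vA where v: "v = vD + vA" "vD \<in> D" "vA \<in> A" using dec[of v] by auto
      obtain wD wA where w: "w = wD + wA" "wD \<in> D" "wA \<in> A" using dec[of w] by auto
      have a1: "br u vD = 0" "br wD u = 0" "br wD vD = 0" using abD u v w by auto
      have a2: "br wA vA = 0" using abA v w by auto
      have a3: "B (br u vA) wA = 0" "B (br wA u) vA = 0" using DA brD v w by auto
      have s1: "B (br vA u) wD = - B u (br vA wD)" using skewA[OF v(3)] .
      have s2: "B (br wA u) vD = - B u (br wA vD)" using skewA[OF w(3)] .
      have n: "B (br u v) w + B (br w u) v + B (br w v) u = 0"
        unfolding v(1) w(1) using a1 a2 a3 s1 s2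
        by (simp add: br_anti[of vA u] br_anti[of vA wD] Bsym[of u] algebra_simps)
      show "B (LC br B u v) w = 0" unfolding M.LC_char using n by simp
    qed
  qed
  have Lx: "LC br B x y = br xA y" if "x = xD + xA" "xD \<in> D" "xA \<in> A" for x xD xA y
    using that LCD LCA by simp
  have flat: "flat br B"
    unfolding flat_def curv_def
  proof (intro allI)
    fix u v w
    obtain uD uA where u: "u = uD + uA" "uD \<in> D" "uA \<in> A" using dec[of u] by auto
    obtain vD vA where v: "v = vD + vA" "vD \<in> D" "vA \<in> A" using dec[of v] by auto
    have "LC br B (br u v) w = 0" using LCD[OF brD] by simp
    moreover have "LC br B u (LC br B v w) = br uA (br vA w)" using Lx[OF u] Lx[OF v] by simp
    moreover have "LC br B v (LC br B u w) = br vA (br uA w)" using Lx[OF u] Lx[OF v] by simp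
    moreover have "br uA (br vA w) - br vA (br uA w) = 0"
    proof -
      have "br uA (br vA w) + br vA (br w uA) + br w (br uA vA) = 0" by (rule jacobi)
      then show ?thesis using abA[OF u(3) v(3)] br_anti[of w uA] by simp
    qed
    ultimately show "LC br B (br u v) w - (LC br B u (LC br B v w) - LC br B v (LC br B u w)) = 0" by simp
  qed
  have ex: "lie_ideal br D \<and> abelian_on br D \<and> lie_subalgebra br A \<and> abelian_on br A \<and>
        D \<inter> A = {0} \<and> {x + y | x y. x \<in> D \<and> y \<in> A} = UNIV \<and>
        (\<forall>u\<in>A. LC br B u = br u) \<and> (\<forall>u\<in>D. LC br B u = (\<lambda>v. 0))"
  proof (intro conjI)
    show "lie_ideal br D" unfolding lie_ideal_def using sD brD by auto
    show "abelian_on br D" unfolding abelian_on_def using abD by auto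
    show "lie_subalgebra br A" unfolding lie_subalgebra_def using sA abA subspace_0[OF sA] by auto
    show "abelian_on br A" unfolding abelian_on_def using abA by auto
    show "D \<inter> A = {0}"
    proof
      show "D \<inter> A \<subseteq> {0}"
      proof
        fix x assume "x \<in> D \<inter> A"
        then have "B x x = 0" using DA by auto
        then show "x \<in> {0}" using pD \<open>x \<in> D \<inter> A\<close> unfolding pos_definite_on_def by force
      qed
      show "{0} \<subseteq> D \<inter> A" using subspace_0[OF sD] subspace_0[OF sA] by auto
    qed
    show "{x + y | x y. x \<in> D \<and> y \<in> A} = UNIV" using dec by blast
    show "\<forall>u\<in>A. LC br B u = br u" using LCA by auto
    show "\<forall>u\<in>D. LC br B u = (\<lambda>v. 0)" using LCD by auto
  qed
  show ?thesis using flat ex by blast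
qed

end

theorem proposition3p3:
  fixes br :: "'g::euclidean_space \<Rightarrow> 'g \<Rightarrow> 'g"
    and B :: "'g \<Rightarrow> 'g \<Rightarrow> real"
  assumes "lie_algebra br"
    and "lorentzian B"
    and "solvable br"
    and "unimodular br"
    and "einstein br B"
    and "nondegenerate_on B (center br)"
  shows "pos_definite_on B (center br) \<or>
    (flat br B \<and>
     (\<exists>bI aS. lie_ideal br bI \<and> abelian_on br bI \<and>
        lie_subalgebra br aS \<and> abelian_on br aS \<and>
        bI \<inter> aS = {0} \<and> {x + y | x y. x \<in> bI \<and> y \<in> aS} = UNIV \<and>
        (\<forall>u\<in>aS. LC br B u = br u) \<and> (\<forall>u\<in>bI. LC br B u = (\<lambda>v. 0))))"
proof -
  interpret mla br B
    by unfold_locales (use assms(1,2) in \<open>auto simp: lorentzian_def\<close>)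
  show ?thesis
  proof (cases "pos_definite_on B (center br)")
    case True then show ?thesis by simp
  next
    case False
    obtain z0 where z0: "z0 \<in> center br" "B z0 z0 = -1" using get_z0[OF assms(6) False] by auto
    obtain c where c: "\<And>u. ricci br B u = c *\<^sub>R u" using assms(5) unfolding einstein_def by auto
    have cc: "B (ricci br B u) u = c * B u u" for u using c[of u] by simp
    have "c \<le> 0" by (rule c_nonpos[OF assms(2) assms(4) cc z0])
    moreover have "c \<ge> 0" by (rule c_nonneg[OF assms(2) assms(3) assms(4) cc z0])
    ultimately have "c = 0" by simp
    then have c0: "B (ricci br B u) u = 0" for u using cc by simp
    show ?thesis using main_case[OF assms(2) assms(3) assms(4) c0 z0] by simp
  qed
qed

end
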